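(* For every dimension $d\ge 2$ and every acceleration parameter $z\in[0,1)$, the qudit Unruh channel is a Hadamard channel, i.e. its complementary channel is entanglement-breaking.
   Context: Let $N(m)=\{\vec n\in\mathbb{Z}_{\ge0}^d:\sum_i n_i=m\}$ and $|(n_1,\dots,n_d)\rangle$ the $d$-mode Fock state. Write $z=\tanh^2 r$. The qudit Unruh channel $\mathcal{N}$ takes input states on the $d$-dimensional single-excitation space spanned by $|\vec e_i\rangle=|(0,\dots,0,1_i,0,\dots,0)\rangle$ and is given by $\mathcal{N}(\rho)=\mathrm{Tr}_E(V\rho V^\dagger)$ for the isometry $$V|\vec e_i\rangle=\frac{1}{\cosh^{d+1}r}\sum_{k=1}^\infty\tanh^{k-1}r\sum_{\vec n\in N(k-1)}\sqrt{1+n_i}\;|(n_1,\dots,1+n_i,\dots,n_d)\rangle_B\otimes|(n_1,\dots,n_d)\rangle_E$$ (this is the restriction of the two-mode-squeezing unitary $\bigotimes_i\exp[r(a_i^\dagger e_i^\dagger-a_ie_i)]$ with environment in vacuum). Its complementary channel is $\mathcal{N}^c(\rho)=\mathrm{Tr}_B(V\rho V^\dagger)$. A channel $\mathcal{M}$ is entanglement-breaking if $(\mathrm{id}\otimes\mathcal{M})(\Phi)$ is separable for the maximally entangled state $\Phi$ (equivalently, for all inputs); a channel is Hadamard if its complementary channel is entanglement-breaking. *)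

theory Defs
  imports "HOL-Analysis.Analysis"
begin

text \<open>Operators are represented by their matrix elements with respect to an orthonormal
  basis indexed by a (countable) type: an operator on l2('b) is a function
  'b => 'b => complex, M i j = <i|M|j>.\<close>

type_synonym 'b op = "'b \<Rightarrow> 'b \<Rightarrow> complex"

text \<open>Density operator: Hermitian, positive semidefinite, trace one (positivity plus a
  summable diagonal makes it trace class).\<close>
definition density_op :: "'b op \<Rightarrow> bool" where
  "density_op M \<longleftrightarrow>
     (\<forall>i j. M j i = cnj (M i j)) \<and>
     (\<forall>x :: 'b \<Rightarrow> complex. finite {i. x i \<noteq> 0} \<longrightarrow>
        0 \<le> Re (\<Sum>i\<in>{i. x i \<noteq> 0}. \<Sum>j\<in>{i. x i \<noteq> 0}. cnj (x i) * M i j * x j)) \<and>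
     ((\<lambda>i. Re (M i i)) has_sum 1) UNIV"

definition product_state :: "('a \<times> 'e) op \<Rightarrow> bool" where
  "product_state P \<longleftrightarrow>
     (\<exists>A B. density_op (A :: 'a op) \<and> density_op (B :: 'e op) \<and>
        P = (\<lambda>(a, e) (a', e'). A a a' * B e e'))"

definition conv_product_states :: "('a \<times> 'e) op set" where
  "conv_product_states =
     {S. \<exists>(k::nat) (p :: nat \<Rightarrow> real) P.
          (\<forall>j<k. 0 \<le> p j \<and> product_state (P j)) \<and> (\<Sum>j<k. p j) = 1 \<and>
          S = (\<lambda>x y. \<Sum>j<k. complex_of_real (p j) * P j x y)}"

definition separable :: "('a \<times> 'e) op \<Rightarrow> bool" where
  "separable \<sigma> \<longleftrightarrow>
     (\<exists>S :: nat \<Rightarrow> ('a \<times> 'e) op. (\<forall>n. S n \<in> conv_product_states) \<and>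
        (\<forall>x y. (\<lambda>n. S n x y) \<longlonglongrightarrow> \<sigma> x y))"

text \<open>Choi state (id (x) M)(Phi) for the maximally entangled state
  Phi = (1/d) sum_{a,a'} |aa><a'a'| on a finite-dimensional input.\<close>
definition choi :: "('a::finite op \<Rightarrow> 'e op) \<Rightarrow> ('a \<times> 'e) op" where
  "choi M = (\<lambda>(a, e) (a', e'). (1 / of_nat CARD('a)) *
              M (\<lambda>i j. if i = a \<and> j = a' then 1 else 0) e e')"

definition entanglement_breaking :: "('a::finite op \<Rightarrow> 'e op) \<Rightarrow> bool" where
  "entanglement_breaking M \<longleftrightarrow> separable (choi M)"

text \<open>An isometry V from l2('a) into l2('b x 'e) is given by its amplitudes
  V i b e = <b|<e| V |i>.  Complementary channel: N^c(rho) = Tr_B (V rho V^dagger).\<close>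
definition compl_channel ::
  "('a::finite \<Rightarrow> 'b \<Rightarrow> 'e \<Rightarrow> complex) \<Rightarrow> 'a op \<Rightarrow> 'e op" where
  "compl_channel V \<rho> = (\<lambda>e e'. infsum (\<lambda>b. \<Sum>i\<in>UNIV. \<Sum>j\<in>UNIV.
       \<rho> i j * V i b e * cnj (V j b e')) UNIV)"

definition hadamard_channel :: "('a::finite \<Rightarrow> 'b \<Rightarrow> 'e \<Rightarrow> complex) \<Rightarrow> bool" where
  "hadamard_channel V \<longleftrightarrow> entanglement_breaking (compl_channel V)"

text \<open>Fock states of d = CARD('d) modes: occupation numbers n :: 'd => nat.
  unit_exc i is the single-excitation state |e_i>.\<close>
definition unit_exc :: "'d::finite \<Rightarrow> ('d \<Rightarrow> nat)" where
  "unit_exc i = (\<lambda>j. if j = i then 1 else 0)"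

text \<open>Amplitudes of the qudit Unruh isometry:
  V|e_i> = cosh(r)^-(d+1) sum_{k>=1} tanh(r)^(k-1) sum_{n in N(k-1)} sqrt(1+n_i) |n+e_i>_B |n>_E.\<close>
definition unruh_iso :: "real \<Rightarrow> 'd::finite \<Rightarrow> ('d \<Rightarrow> nat) \<Rightarrow> ('d \<Rightarrow> nat) \<Rightarrow> complex" where
  "unruh_iso r i b n =
     (if b = (\<lambda>j. n j + unit_exc i j) then
        complex_of_real (1 / cosh r ^ (CARD('d) + 1) * tanh r ^ (\<Sum>j\<in>UNIV. n j)
                         * sqrt (1 + real (n i)))
      else 0)"

end

theory Submission
  imports Defs "HOL-Real_Asymp.Real_Asymp"
begin


lemma chu_V1: "(\<Sum>l\<le>M. ((M - l) choose n) * (l choose k)) = Suc M choose (n + k + 1)"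
proof (induction M arbitrary: k)
  case 0
  then show ?case by (cases n; cases k) auto
next
  case (Suc M)
  have split: "(\<Sum>l\<le>Suc M. ((Suc M - l) choose n) * (l choose k))
      = (Suc M choose n) * (0 choose k) + (\<Sum>l\<le>M. ((M - l) choose n) * (Suc l choose k))"
    by (subst sum.atMost_Suc_shift) simp
  show ?case
  proof (cases k)
    case 0
    have "(\<Sum>l\<le>M. ((M - l) choose n) * (Suc l choose k)) = Suc M choose (n + 1)"
      using Suc.IH[of 0] 0 by simp
    then show ?thesis using split 0 by simp
  next
    case (Suc k')
    have "(\<Sum>l\<le>M. ((M - l) choose n) * (Suc l choose k))
       = (\<Sum>l\<le>M. ((M - l) choose n) * (l choose k)) + (\<Sum>l\<le>M. ((M - l) choose n) * (l choose k'))"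
      using Suc by (simp add: sum.distrib algebra_simps)
    also have "\<dots> = (Suc M choose (n + k + 1)) + (Suc M choose (n + k' + 1))"
      using Suc.IH by simp
    also have "\<dots> = Suc (Suc M) choose (n + k + 1)"
      using Suc by simp
    finally show ?thesis using split Suc by simp
  qed
qed

declare binomial_Suc_Suc[simp del]

lemma chu_V2: "(\<Sum>l\<le>M. ((M - l) choose n) * ((l + k) choose k)) = (M + k + 1) choose (n + k + 1)"
proof -
  have "(M + k + 1) choose (n + k + 1) = (\<Sum>l\<le>M + k. ((M + k - l) choose n) * (l choose k))"
    using chu_V1[of "M + k" n k] by simp
  also have "\<dots> = (\<Sum>l\<in>{0..M + k}. ((M + k - l) choose n) * (l choose k))"
    by (simp add: atMost_atLeast0)
  also have "\<dots> = (\<Sum>l\<in>{k..M + k}. ((M + k - l) choose n) * (l choose k))"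
  proof (rule sum.mono_neutral_right)
    show "\<forall>i\<in>{0..M + k} - {k..M + k}. ((M + k - i) choose n) * (i choose k) = 0" by auto
  qed auto
  also have "\<dots> = (\<Sum>l\<in>{0..M}. ((M + k - (l + k)) choose n) * ((l + k) choose k))"
    using sum.shift_bounds_cl_nat_ivl[of "\<lambda>l. ((M + k - l) choose n) * (l choose k)" 0 k M] by simp
  also have "\<dots> = (\<Sum>l\<le>M. ((M - l) choose n) * ((l + k) choose k))"
    by (simp add: atMost_atLeast0)
  finally show ?thesis by simp
qed

lemma fact_choose_le_pow: "fact k * (l choose k) \<le> (l::nat) ^ k"
proof (cases "k \<le> l")
  case True
  have eq: "fact k * fact (l - k) * (l choose k) = (fact l :: nat)" by (rule binomial_fact_lemma[OF True])
  have "fact l div fact (l - k) = (fact k * (l choose k) * fact (l - k)) div (fact (l - k) :: nat)"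
    by (simp only: eq[symmetric] ac_simps)
  also have "\<dots> = fact k * (l choose k)"
    by (rule nonzero_mult_div_cancel_right) simp
  finally have "fact k * (l choose k) = fact l div fact (l - k)" by simp
  also have "\<dots> \<le> l ^ k" by (rule fact_div_fact_le_pow[OF True])
  finally show ?thesis .
next
  case False then show ?thesis by (simp add: binomial_eq_0 not_le)
qed

lemma pow_le_fact_choose: "Suc l ^ k \<le> fact k * ((l + k) choose k)"
proof (induction k)
  case 0 then show ?case by simp
next
  case (Suc k)
  have "fact (Suc k) * ((l + Suc k) choose Suc k) = fact k * (Suc k * (Suc (l + k) choose Suc k))"
  proof -
    have f: "fact (Suc k) = Suc k * (fact k :: nat)" by simp
    show ?thesis unfolding f add_Suc_right by (simp only: ac_simps)
  qed
  also have "\<dots> = fact k * (Suc (l + k) * ((l + k) choose k))"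
    by (simp only: Suc_times_binomial)
  also have "\<dots> = Suc (l + k) * (fact k * ((l + k) choose k))" by (rule mult.left_commute)
  also have "\<dots> \<ge> Suc l * Suc l ^ k"
    by (intro mult_mono Suc.IH) auto
  finally show ?case by simp
qed

definition MM :: "nat \<Rightarrow> nat" where "MM n = n * n + n"
definition C0 :: "nat \<Rightarrow> real" where "C0 n = real (Suc (MM n) choose Suc n)"
definition R1 :: "nat \<Rightarrow> nat \<Rightarrow> real" where
  "R1 n k = real (Suc (MM n) choose (n + k + 1)) / (C0 n * real n ^ k)"
definition R2 :: "nat \<Rightarrow> nat \<Rightarrow> real" where
  "R2 n k = real ((MM n + k + 1) choose (n + k + 1)) / (C0 n * real n ^ k)"

lemma C0_pos: "C0 n > 0"
proof -
  have "Suc n \<le> Suc (MM n)" unfolding MM_def by simp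
  then have "Suc (MM n) choose Suc n > 0" by (rule zero_less_binomial)
  then show ?thesis unfolding C0_def by simp
qed

lemma R1_0: "R1 n 0 = 1"
  using C0_pos[of n] unfolding R1_def C0_def by (simp del: binomial_Suc_Suc)

lemma R2_0: "R2 n 0 = 1"
  using C0_pos[of n] unfolding R2_def C0_def by (simp del: binomial_Suc_Suc)

lemma choose_step_down:
  assumes "K < N"
  shows "real (N choose Suc K) * real (Suc K) = real (N choose K) * real (N - K)"
proof -
  obtain N' where N: "N = Suc N'" using assms by (cases N) auto
  have "(N - K) * (N choose K) = N * ((N - 1) choose K)" by (rule binomial_absorb_comp)
  moreover have "Suc N' * (N' choose K) = (Suc N' choose Suc K) * Suc K" by (rule Suc_times_binomial_eq)
  ultimately have "(N choose Suc K) * Suc K = (N choose K) * (N - K)" using N by (simp add: mult.commute)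
  then show ?thesis by (metis of_nat_mult)
qed

lemma R1_step:
  assumes "n > 0" "k < n * n"
  shows "R1 n (Suc k) = R1 n k * ((real (n * n) - k) / ((real n + k + 2) * real n))"
proof -
  define X where "X = real (Suc (MM n) choose (n + k + 1))"
  define Y where "Y = real (Suc (MM n) choose Suc (n + k + 1))"
  have lt: "n + k + 1 < Suc (MM n)" using assms unfolding MM_def by simp
  have h0: "Y * real (Suc (n + k + 1)) = X * real (Suc (MM n) - (n + k + 1))"
    unfolding X_def Y_def by (rule choose_step_down[OF lt])
  have d: "real (Suc (MM n) - (n + k + 1)) = real (n * n) - k"
    using assms unfolding MM_def by (simp add: of_nat_diff)
  have s: "real (Suc (n + k + 1)) = real n + k + 2" by simp
  have h1: "Y * (real n + k + 2) = X * (real (n * n) - k)"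
    using h0 unfolding d s .
  have pos: "real n + k + 2 > 0" by simp
  have e: "Y = X * (real (n * n) - k) / (real n + k + 2)"
    using h1 pos by (simp add: eq_divide_eq)
  have Y': "real (Suc (MM n) choose (n + Suc k + 1)) = Y" unfolding Y_def by simp
  show ?thesis unfolding R1_def Y' e X_def[symmetric] using assms C0_pos[of n]
    by (simp add: field_simps)
qed

lemma R2_step:
  assumes "n > 0"
  shows "R2 n (Suc k) = R2 n k * ((real (n * n) + n + k + 2) / ((real n + k + 2) * real n))"
proof -
  have "Suc (n + k + 1) * (Suc (MM n + k + 1) choose Suc (n + k + 1))
        = Suc (MM n + k + 1) * ((MM n + k + 1) choose (n + k + 1))"
    by (rule Suc_times_binomial)
  hence "real (Suc (n + k + 1)) * real (Suc (MM n + k + 1) choose Suc (n + k + 1))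
        = real (Suc (MM n + k + 1)) * real ((MM n + k + 1) choose (n + k + 1))"
    by (metis of_nat_mult)
  hence e: "real ((MM n + Suc k + 1) choose (n + Suc k + 1))
      = real ((MM n + k + 1) choose (n + k + 1)) * (real (n * n) + n + k + 2) / (real n + k + 2)"
    unfolding MM_def by (simp add: field_simps)
  show ?thesis unfolding R2_def e using assms C0_pos[of n]
    by (simp add: field_simps)
qed

lemma R1_lim: "(\<lambda>n. R1 n k) \<longlonglongrightarrow> 1"
proof (induction k)
  case 0
  show ?case by (simp add: R1_0)
next
  case (Suc k)
  have f: "((\<lambda>n::nat. (real (n*n) - k)/((real n + k + 2)* real n)) \<longlongrightarrow> 1) sequentially"
    by real_asymp
  have ev: "eventually (\<lambda>n. R1 n k * ((real (n * n) - k) / ((real n + k + 2) * real n)) = R1 n (Suc k)) sequentially"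
  proof -
    have "eventually (\<lambda>n. n \<ge> k + 1) sequentially" by (rule eventually_ge_at_top)
    then show ?thesis
    proof eventually_elim
      case (elim n)
      then have "k < n * n" by (metis Suc_eq_plus1 Suc_le_lessD le_square order_less_le_trans)
      with elim show ?case by (simp add: R1_step)
    qed
  qed
  from tendsto_mult[OF Suc.IH f] have "(\<lambda>n. R1 n k * ((real (n * n) - k) / ((real n + k + 2) * real n))) \<longlonglongrightarrow> 1"
    by simp
  then show ?case using ev by (rule Lim_transform_eventually)
qed

lemma R2_lim: "(\<lambda>n. R2 n k) \<longlonglongrightarrow> 1"
proof (induction k)
  case 0
  show ?case by (simp add: R2_0)
next
  case (Suc k)
  have f: "((\<lambda>n::nat. (real (n*n) + n + k + 2)/((real n + k + 2)* real n)) \<longlongrightarrow> 1) sequentially"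
    by real_asymp
  have ev: "eventually (\<lambda>n. R2 n k * ((real (n * n) + n + k + 2) / ((real n + k + 2) * real n)) = R2 n (Suc k)) sequentially"
  proof -
    have "eventually (\<lambda>n. n \<ge> 1) sequentially" by (rule eventually_ge_at_top)
    then show ?thesis by eventually_elim (simp add: R2_step)
  qed
  from tendsto_mult[OF Suc.IH f] have "(\<lambda>n. R2 n k * ((real (n * n) + n + k + 2) / ((real n + k + 2) * real n))) \<longlonglongrightarrow> 1"
    by simp
  then show ?case using ev by (rule Lim_transform_eventually)
qed

definition Usum :: "nat \<Rightarrow> nat \<Rightarrow> real" where
  "Usum n k = (\<Sum>l\<le>MM n. real ((MM n - l) choose n) * real (Suc l) ^ k)"

definition Uq :: "nat \<Rightarrow> nat \<Rightarrow> real" where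
  "Uq n k = Usum n k / (C0 n * real n ^ k)"

lemma Usum_lower: "fact k * real (Suc (MM n) choose (n + k + 1)) \<le> Usum n k"
proof -
  have "fact k * real (Suc (MM n) choose (n + k + 1))
      = fact k * real (\<Sum>l\<le>MM n. ((MM n - l) choose n) * (l choose k))"
    by (simp only: chu_V1)
  also have "\<dots> = (\<Sum>l\<le>MM n. real ((MM n - l) choose n) * (fact k * real (l choose k)))"
    by (simp only: of_nat_sum of_nat_mult sum_distrib_left mult.left_commute)
  also have "\<dots> \<le> Usum n k" unfolding Usum_def
  proof (rule sum_mono)
    fix l
    have "fact k * (l choose k) \<le> Suc l ^ k"
      using fact_choose_le_pow[of k l] power_mono[of l "Suc l" k] by linarith
    hence "fact k * real (l choose k) \<le> real (Suc l) ^ k"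
      by (metis of_nat_fact of_nat_le_iff of_nat_mult of_nat_power)
    then show "real ((MM n - l) choose n) * (fact k * real (l choose k)) \<le> real ((MM n - l) choose n) * real (Suc l) ^ k"
      by (intro mult_left_mono) auto
  qed
  finally show ?thesis .
qed

lemma Usum_upper: "Usum n k \<le> fact k * real ((MM n + k + 1) choose (n + k + 1))"
proof -
  have "Usum n k \<le> (\<Sum>l\<le>MM n. real ((MM n - l) choose n) * (fact k * real ((l + k) choose k)))"
    unfolding Usum_def
  proof (rule sum_mono)
    fix l
    have "real (Suc l ^ k) \<le> real (fact k * ((l + k) choose k))"
      using pow_le_fact_choose[of l k] by linarith
    hence "real (Suc l) ^ k \<le> fact k * real ((l + k) choose k)"
      by (metis of_nat_fact of_nat_mult of_nat_power)
    then show "real ((MM n - l) choose n) * real (Suc l) ^ k \<le> real ((MM n - l) choose n) * (fact k * real ((l + k) choose k))"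
      by (intro mult_left_mono) auto
  qed
  also have "\<dots> = fact k * real (\<Sum>l\<le>MM n. ((MM n - l) choose n) * ((l + k) choose k))"
    by (simp only: of_nat_sum of_nat_mult sum_distrib_left mult.left_commute)
  also have "\<dots> = fact k * real ((MM n + k + 1) choose (n + k + 1))"
    by (simp only: chu_V2)
  finally show ?thesis .
qed

lemma Uq_bounds:
  assumes "n \<ge> 1"
  shows "fact k * R1 n k \<le> Uq n k" "Uq n k \<le> fact k * R2 n k"
proof -
  have p: "C0 n * real n ^ k > 0" using C0_pos[of n] assms by simp
  have a: "fact k * R1 n k = (fact k * real (Suc (MM n) choose (n + k + 1))) / (C0 n * real n ^ k)"
    unfolding R1_def by (simp only: times_divide_eq_right)
  have b: "fact k * R2 n k = (fact k * real ((MM n + k + 1) choose (n + k + 1))) / (C0 n * real n ^ k)"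
    unfolding R2_def by (simp only: times_divide_eq_right)
  show "fact k * R1 n k \<le> Uq n k" unfolding a Uq_def
    by (rule divide_right_mono[OF Usum_lower]) (use p in linarith)
  show "Uq n k \<le> fact k * R2 n k" unfolding b Uq_def
    by (rule divide_right_mono[OF Usum_upper]) (use p in linarith)
qed

lemma Uq_lim: "(\<lambda>n. Uq n k) \<longlonglongrightarrow> fact k"
proof (rule tendsto_sandwich)
  show "eventually (\<lambda>n. fact k * R1 n k \<le> Uq n k) sequentially"
    using eventually_ge_at_top[of 1] by eventually_elim (rule Uq_bounds)
  show "eventually (\<lambda>n. Uq n k \<le> fact k * R2 n k) sequentially"
    using eventually_ge_at_top[of 1] by eventually_elim (rule Uq_bounds)
  show "(\<lambda>n. fact k * R1 n k) \<longlonglongrightarrow> fact k" using tendsto_mult[OF tendsto_const R1_lim] by simp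
  show "(\<lambda>n. fact k * R2 n k) \<longlonglongrightarrow> fact k" using tendsto_mult[OF tendsto_const R2_lim] by simp
qed



definition lev :: "('d::finite \<Rightarrow> nat) \<Rightarrow> nat" where "lev e = (\<Sum>i\<in>UNIV. e i)"
definition addu :: "('d::finite \<Rightarrow> nat) \<Rightarrow> 'd \<Rightarrow> ('d \<Rightarrow> nat)" where
  "addu e a = (\<lambda>j. e j + unit_exc a j)"

lemma lev_addu: "lev (addu e a) = Suc (lev e)"
  unfolding lev_def addu_def unit_exc_def by (simp add: sum.distrib)

lemma addu_eq_lev: "addu e a = addu e' a' \<Longrightarrow> lev e = lev e'"
  by (metis lev_addu nat.inject)

lemma sum_sum_delta:
  fixes f :: "'a::finite \<Rightarrow> 'a \<Rightarrow> complex"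
  shows "(\<Sum>i\<in>UNIV. \<Sum>j\<in>UNIV. (if i = a \<and> j = a' then 1 else 0) * f i j) = f a a'"
proof -
  have i: "(\<Sum>j\<in>UNIV. (if i = a \<and> j = a' then 1 else 0) * f i j) = (if i = a then f i a' else 0)" for i
  proof -
    have "(\<Sum>j\<in>UNIV. (if i = a \<and> j = a' then 1 else 0) * f i j)
        = (\<Sum>j\<in>UNIV. if j = a' then (if i = a then f i j else 0) else 0)"
      by (rule sum.cong) auto
    then show ?thesis by simp
  qed
  show ?thesis unfolding i by simp
qed

lemma choi_unruh:
  fixes r :: real
  defines "V \<equiv> (unruh_iso r :: 'd::finite \<Rightarrow> ('d \<Rightarrow> nat) \<Rightarrow> ('d \<Rightarrow> nat) \<Rightarrow> complex)"
  shows "choi (compl_channel V) (a, e) (a', e') =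
    (if addu e a = addu e' a' then
      complex_of_real ((1 / real CARD('d)) * (1 / cosh r ^ (CARD('d) + 1)) ^ 2
         * tanh r ^ (lev e + lev e') * sqrt (1 + real (e a)) * sqrt (1 + real (e' a')))
     else 0)"
proof -
  define g where "g b = V a b e * cnj (V a' b e')" for b
  have inner: "(\<Sum>i\<in>UNIV. \<Sum>j\<in>UNIV. (if i = a \<and> j = a' then 1 else 0) * V i b e * cnj (V j b e')) = g b" for b
    using sum_sum_delta[of a a' "\<lambda>i j. V i b e * cnj (V j b e')"] unfolding g_def
    by (simp add: mult.assoc)
  have gz: "g b = 0" if "b \<noteq> addu e a" for b
    using that unfolding g_def V_def unruh_iso_def addu_def by auto
  have inf: "infsum g UNIV = g (addu e a)"
  proof -
    have "infsum g UNIV = infsum g {addu e a}"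
      by (rule infsum_cong_neutral) (use gz in auto)
    then show ?thesis by simp
  qed
  have c1: "V a (addu e a) e = complex_of_real (1 / cosh r ^ (CARD('d) + 1) * tanh r ^ lev e * sqrt (1 + real (e a)))"
    unfolding V_def unruh_iso_def addu_def lev_def by simp
  have c2: "V a' (addu e a) e' = (if addu e a = addu e' a' then
      complex_of_real (1 / cosh r ^ (CARD('d) + 1) * tanh r ^ lev e' * sqrt (1 + real (e' a'))) else 0)"
    unfolding V_def unruh_iso_def lev_def by (auto simp: addu_def)
  have "choi (compl_channel V) (a, e) (a', e') = (1 / of_nat CARD('d)) * infsum g UNIV"
    unfolding choi_def compl_channel_def by (simp add: inner)
  also have "\<dots> = (1 / of_nat CARD('d)) * g (addu e a)" by (simp only: inf)
  also have "\<dots> = (if addu e a = addu e' a' then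
      complex_of_real ((1 / real CARD('d)) * (1 / cosh r ^ (CARD('d) + 1)) ^ 2
         * tanh r ^ (lev e + lev e') * sqrt (1 + real (e a)) * sqrt (1 + real (e' a')))
     else 0)"
    unfolding g_def c1 c2 by (simp add: power_add power2_eq_square field_simps)
  finally show ?thesis .
qed

lemma cosh_tanh: "(1 / cosh r ^ k) ^ 2 = (1 - tanh r ^ 2) ^ k" for r :: real
proof -
  have "cosh r \<noteq> 0" using cosh_real_pos[of r] by simp
  then have "1 - tanh r ^ 2 = (cosh r ^ 2 - sinh r ^ 2) / cosh r ^ 2"
    unfolding tanh_def by (simp add: field_simps power_divide)
  then have "1 - tanh r ^ 2 = 1 / cosh r ^ 2"
    by (simp add: hyperbolic_pythagoras)
  then show ?thesis by (simp add: power_mult_distrib power_divide power_mult[symmetric] mult.commute)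
qed

definition sigma_t :: "real \<Rightarrow> 'd::finite \<Rightarrow> ('d \<Rightarrow> nat) \<Rightarrow> 'd \<Rightarrow> ('d \<Rightarrow> nat) \<Rightarrow> real" where
  "sigma_t z a e a' e' = (if addu e a = addu e' a' then
      (1 / real CARD('d)) * (1 - z) ^ (CARD('d) + 1) * z ^ lev e * sqrt (1 + real (e a)) * sqrt (1 + real (e' a'))
     else 0)"

lemma choi_unruh_sigma:
  fixes r :: real
  shows "choi (compl_channel (unruh_iso r :: 'd::finite \<Rightarrow> ('d \<Rightarrow> nat) \<Rightarrow> ('d \<Rightarrow> nat) \<Rightarrow> complex)) (a, e) (a', e')
     = complex_of_real (sigma_t (tanh r ^ 2) a e a' e')"
proof (cases "addu e a = addu e' a'")
  case True
  then have "lev e' = lev e" using addu_eq_lev by metis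
  then have "tanh r ^ (lev e + lev e') = (tanh r ^ 2) ^ lev e"
    by (simp add: power_mult[symmetric] mult_2 power_add)
  then show ?thesis unfolding choi_unruh sigma_t_def using True cosh_tanh[of r "CARD('d) + 1"] by simp
next
  case False
  then show ?thesis unfolding choi_unruh sigma_t_def by simp
qed



definition lvl :: "nat \<Rightarrow> ('d::finite \<Rightarrow> nat) set" where "lvl L = {e. lev e = L}"
definition levle :: "nat \<Rightarrow> ('d::finite \<Rightarrow> nat) set" where "levle n = {e. lev e \<le> n}"

lemma le_lev: "e i \<le> lev e"
  unfolding lev_def by (rule member_le_sum) auto

lemma finite_levle: "finite (levle n :: ('d::finite \<Rightarrow> nat) set)"
proof -
  have "levle n \<subseteq> PiE UNIV (\<lambda>_. {..n})"
    unfolding levle_def using le_lev by (auto simp: PiE_UNIV_domain intro: order_trans)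
  moreover have "finite (PiE (UNIV::'d set) (\<lambda>_. {..n}))" by (rule finite_PiE) auto
  ultimately show ?thesis by (rule finite_subset)
qed

lemma finite_lvl: "finite (lvl L :: ('d::finite \<Rightarrow> nat) set)"
proof -
  have "lvl L \<subseteq> (levle L :: ('d \<Rightarrow> nat) set)" unfolding lvl_def levle_def by auto
  then show ?thesis using finite_levle finite_subset by blast
qed

lemma lev_delta: "lev (\<lambda>i. if i = i0 then L else 0) = L"
  unfolding lev_def by simp

lemma lvl_nonempty: "lvl L \<noteq> ({} :: ('d::finite \<Rightarrow> nat) set)"
proof -
  obtain i0 :: 'd where True by simp
  have "(\<lambda>i. if i = i0 then L else 0) \<in> lvl L" unfolding lvl_def by (simp add: lev_delta)
  then show ?thesis by auto
qed

definition Dsum :: "'d::finite itself \<Rightarrow> nat \<Rightarrow> real" where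
  "Dsum _ L = (\<Sum>e\<in>(lvl L :: ('d \<Rightarrow> nat) set). \<Sum>i\<in>UNIV. real (Suc (e i)))"

lemma Dsum_pos: "Dsum TYPE('d::finite) L > 0"
proof -
  have "(\<Sum>e\<in>(lvl L :: ('d \<Rightarrow> nat) set). \<Sum>i\<in>UNIV. real (Suc (e i))) > 0"
    by (intro sum_pos finite_lvl lvl_nonempty) auto
  then show ?thesis unfolding Dsum_def .
qed

definition qL :: "real \<Rightarrow> 'd::finite itself \<Rightarrow> nat \<Rightarrow> real" where
  "qL z T L = (1 / real CARD('d)) * (1 - z) ^ (CARD('d) + 1) * z ^ L * Dsum T L"

lemma has_sum_sum_fin:
  fixes f :: "'i \<Rightarrow> 'a \<Rightarrow> real"
  assumes "finite I" "\<And>i. i \<in> I \<Longrightarrow> (f i has_sum s i) A"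
  shows "((\<lambda>x. \<Sum>i\<in>I. f i x) has_sum (\<Sum>i\<in>I. s i)) A"
  using assms
proof (induction I rule: finite_induct)
  case empty then show ?case by (simp add: has_sum_0)
next
  case (insert i I)
  then show ?case by (simp add: has_sum_add)
qed

lemma prod_has_sum:
  fixes g :: "'d::finite \<Rightarrow> nat \<Rightarrow> real"
  assumes nn: "\<And>i k. g i k \<ge> 0" and hs: "\<And>i. (g i has_sum s i) UNIV" and sp: "\<And>i. s i > 0"
  shows "((\<lambda>e. \<Prod>i\<in>UNIV. g i (e i)) has_sum (\<Prod>i\<in>UNIV. s i)) UNIV"
proof -
  have abs: "(\<lambda>k. norm (g i k)) summable_on UNIV" for i
  proof -
    have "(\<lambda>k. norm (g i k)) = g i" using nn by auto
    then show ?thesis using hs[of i] has_sum_imp_summable by metis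
  qed
  have inf: "infsum (\<lambda>e. \<Prod>i\<in>UNIV. g i (e i)) (PiE UNIV (\<lambda>_. UNIV)) = (\<Prod>i\<in>UNIV. infsum (g i) UNIV)"
    by (rule infsum_prod_PiE_abs) (use abs in auto)
  have inf2: "infsum (\<lambda>e. \<Prod>i\<in>UNIV. g i (e i)) UNIV = (\<Prod>i\<in>UNIV. s i)"
  proof -
    have "infsum (g i) UNIV = s i" for i using hs[of i] by (rule infsumI)
    then show ?thesis using inf by simp
  qed
  have "(\<Prod>i\<in>UNIV. s i) \<noteq> 0" using sp by (simp add: prod_pos less_imp_neq[symmetric])
  then have "(\<lambda>e. \<Prod>i\<in>UNIV. g i (e i)) summable_on UNIV"
    using inf2 infsum_not_exists by metis
  then show ?thesis using inf2 has_sum_infsum by metis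
qed

lemma geo_has_sum:
  fixes z :: real assumes "0 \<le> z" "z < 1"
  shows "((\<lambda>k. z ^ k) has_sum (1 / (1 - z))) UNIV"
proof -
  have "(\<lambda>k. z ^ k) sums (1 / (1 - z))" using geometric_sums[of z] assms by simp
  then show ?thesis by (rule sums_nonneg_imp_has_sum) (use assms in simp)
qed

lemma geo2_has_sum:
  fixes z :: real assumes "0 \<le> z" "z < 1"
  shows "((\<lambda>k. real (Suc k) * z ^ k) has_sum (1 / (1 - z) ^ 2)) UNIV"
proof -
  have "(\<lambda>k. of_nat (Suc k) * z ^ k) sums (1 / (1 - z) ^ 2)"
    by (rule geometric_deriv_sums) (use assms in simp)
  then show ?thesis by (rule sums_nonneg_imp_has_sum) (use assms in simp)
qed

lemma h_has_sum:
  fixes z :: real assumes z: "0 \<le> z" "z < 1"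
  shows "((\<lambda>e::'d::finite \<Rightarrow> nat. z ^ lev e * (\<Sum>i\<in>UNIV. real (Suc (e i))))
           has_sum (real CARD('d) / (1 - z) ^ (CARD('d) + 1))) UNIV"
proof -
  define d where "d = CARD('d)"
  have d1: "d \<ge> 1" unfolding d_def using zero_less_card_finite[where 'a='d] by linarith
  define A where "A = 1 / (1 - z) ^ 2"
  define B where "B = 1 / (1 - z)"
  define f where "f i i' k = z ^ k * (if i' = i then real (Suc k) else 1)" for i i' :: 'd and k
  have fhs: "(f i i' has_sum (if i' = i then A else B)) UNIV" for i i'
  proof (cases "i' = i")
    case True
    then show ?thesis unfolding f_def A_def using geo2_has_sum[OF z] by (simp add: mult.commute)
  next
    case False
    then show ?thesis unfolding f_def B_def using geo_has_sum[OF z] by simp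
  qed
  have Apos: "A > 0" "B > 0" unfolding A_def B_def using z by auto
  have each: "((\<lambda>e. \<Prod>i'\<in>UNIV. f i i' (e i')) has_sum (\<Prod>i'\<in>UNIV. if i' = i then A else B)) UNIV" for i
  proof (rule prod_has_sum)
    show "f i i' k \<ge> 0" for i' k unfolding f_def using z by auto
    show "(f i i' has_sum (if i' = i then A else B)) UNIV" for i' by (rule fhs)
    show "(if i' = i then A else B) > 0" for i' using Apos by auto
  qed
  have pv: "(\<Prod>i'\<in>UNIV. if i' = i then A else B) = 1 / (1 - z) ^ (d + 1)" for i :: 'd
  proof -
    have "(\<Prod>i'\<in>(UNIV::'d set). if i' = i then A else B) = A * (\<Prod>i'\<in>(UNIV::'d set) - {i}. B)"
      by (subst prod.delta_remove) auto
    also have "(\<Prod>i'\<in>(UNIV::'d set) - {i}. B) = B ^ (d - 1)"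
      by (simp add: d_def card_Diff_singleton)
    finally have "(\<Prod>i'\<in>(UNIV::'d set). if i' = i then A else B) = A * B ^ (d - 1)" .
    also have "\<dots> = (1 / (1 - z)) ^ (2 + (d - 1))" unfolding A_def B_def
      by (simp only: power_add power_divide power_one)
    also have "2 + (d - 1) = d + 1" using d1 by simp
    finally show ?thesis by (simp add: power_divide)
  qed
  have fe: "(\<Sum>i\<in>UNIV. \<Prod>i'\<in>UNIV. f i i' (e i')) = z ^ lev e * (\<Sum>i\<in>UNIV. real (Suc (e i)))" for e :: "'d \<Rightarrow> nat"
  proof -
    have "(\<Prod>i'\<in>UNIV. f i i' (e i')) = z ^ lev e * real (Suc (e i))" for i
    proof -
      have "(\<Prod>i'\<in>UNIV. f i i' (e i')) = (\<Prod>i'\<in>UNIV. z ^ e i') * (\<Prod>i'\<in>UNIV. if i' = i then real (Suc (e i')) else 1)"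
        unfolding f_def by (rule prod.distrib)
      also have "\<dots> = z ^ lev e * real (Suc (e i))"
        unfolding lev_def by (simp add: power_sum)
      finally show ?thesis .
    qed
    then show ?thesis by (simp add: sum_distrib_left)
  qed
  have "((\<lambda>e::'d \<Rightarrow> nat. \<Sum>i\<in>UNIV. \<Prod>i'\<in>UNIV. f i i' (e i')) has_sum (\<Sum>i\<in>(UNIV::'d set). 1 / (1 - z) ^ (d + 1))) UNIV"
  proof -
    have "((\<lambda>e::'d \<Rightarrow> nat. \<Sum>i\<in>UNIV. \<Prod>i'\<in>UNIV. f i i' (e i')) has_sum (\<Sum>i\<in>(UNIV::'d set). \<Prod>i'\<in>UNIV. if i' = i then A else B)) UNIV"
      by (rule has_sum_sum_fin) (use each in auto)
    then show ?thesis unfolding pv .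
  qed
  then show ?thesis unfolding fe by (simp add: d_def)
qed

lemma levle_lim: "filterlim (\<lambda>n. levle n :: ('d::finite \<Rightarrow> nat) set) (finite_subsets_at_top UNIV) sequentially"
  unfolding filterlim_finite_subsets_at_top
proof (intro allI impI)
  fix X :: "('d \<Rightarrow> nat) set" assume X: "finite X \<and> X \<subseteq> UNIV"
  have "eventually (\<lambda>n. n \<ge> (\<Sum>x\<in>X. lev x)) sequentially" by (rule eventually_ge_at_top)
  then show "eventually (\<lambda>n. finite (levle n) \<and> X \<subseteq> levle n \<and> levle n \<subseteq> UNIV) sequentially"
  proof eventually_elim
    case (elim n)
    have "X \<subseteq> levle n"
    proof
      fix x assume "x \<in> X"
      then have "lev x \<le> (\<Sum>x\<in>X. lev x)" using X by (intro member_le_sum) auto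
      then show "x \<in> levle n" using elim unfolding levle_def by simp
    qed
    then show ?case using finite_levle by auto
  qed
qed

lemma levels_regroup:
  "(\<Sum>L\<le>n. z ^ L * Dsum TYPE('d::finite) L)
     = (\<Sum>e\<in>(levle n :: ('d \<Rightarrow> nat) set). z ^ lev e * (\<Sum>i\<in>UNIV. real (Suc (e i))))"
proof -
  have "(\<Sum>L\<le>n. z ^ L * Dsum TYPE('d) L)
      = (\<Sum>L\<le>n. \<Sum>e\<in>{x \<in> (levle n :: ('d \<Rightarrow> nat) set). lev x = L}. z ^ lev e * (\<Sum>i\<in>UNIV. real (Suc (e i))))"
  proof (rule sum.cong[OF refl])
    fix L assume L: "L \<in> {..n}"
    have s: "{x \<in> (levle n :: ('d \<Rightarrow> nat) set). lev x = L} = lvl L"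
      using L unfolding levle_def lvl_def by auto
    show "z ^ L * Dsum TYPE('d) L = (\<Sum>e\<in>{x \<in> (levle n :: ('d \<Rightarrow> nat) set). lev x = L}. z ^ lev e * (\<Sum>i\<in>UNIV. real (Suc (e i))))"
      unfolding s Dsum_def by (simp add: sum_distrib_left lvl_def)
  qed
  also have "\<dots> = (\<Sum>e\<in>(levle n :: ('d \<Rightarrow> nat) set). z ^ lev e * (\<Sum>i\<in>UNIV. real (Suc (e i))))"
    using finite_levle[of n, where 'd='d] by (intro sum.group) (auto simp: levle_def)
  finally show ?thesis .
qed

lemma qL_lim:
  fixes z :: real assumes z: "0 \<le> z" "z < 1"
  shows "(\<lambda>n. \<Sum>L\<le>n. qL z TYPE('d::finite) L) \<longlonglongrightarrow> 1"
proof -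
  define d where "d = CARD('d)"
  have dpos: "real d > 0" unfolding d_def by simp
  have t1: "((\<lambda>F. \<Sum>e\<in>F. z ^ lev e * (\<Sum>i\<in>UNIV. real (Suc (e i)))) \<longlongrightarrow> real d / (1 - z) ^ (d + 1))
              (finite_subsets_at_top (UNIV :: ('d \<Rightarrow> nat) set))"
    using h_has_sum[OF z, where 'd='d] unfolding has_sum_def d_def .
  have t2: "(\<lambda>n. \<Sum>e\<in>(levle n :: ('d \<Rightarrow> nat) set). z ^ lev e * (\<Sum>i\<in>UNIV. real (Suc (e i)))) \<longlonglongrightarrow> real d / (1 - z) ^ (d + 1)"
    by (rule filterlim_compose[OF t1 levle_lim])
  have eq: "(\<Sum>L\<le>n. qL z TYPE('d) L) = (1 / real d) * (1 - z) ^ (d + 1) *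
      (\<Sum>e\<in>(levle n :: ('d \<Rightarrow> nat) set). z ^ lev e * (\<Sum>i\<in>UNIV. real (Suc (e i))))" for n
    unfolding qL_def levels_regroup[symmetric] d_def by (simp add: sum_distrib_left mult.assoc)
  have "(\<lambda>n. (1 / real d) * (1 - z) ^ (d + 1) *
      (\<Sum>e\<in>(levle n :: ('d \<Rightarrow> nat) set). z ^ lev e * (\<Sum>i\<in>UNIV. real (Suc (e i)))))
      \<longlonglongrightarrow> (1 / real d) * (1 - z) ^ (d + 1) * (real d / (1 - z) ^ (d + 1))"
    by (intro tendsto_intros t2)
  also have "(1 / real d) * (1 - z) ^ (d + 1) * (real d / (1 - z) ^ (d + 1)) = 1"
    using dpos z by (simp add: field_simps)
  finally show ?thesis unfolding eq .
qed



definition vop :: "('b \<Rightarrow> complex) \<Rightarrow> 'b op" where "vop v = (\<lambda>x y. v x * cnj (v y))"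

lemma density_vop:
  assumes "((\<lambda>x. (cmod (v x))\<^sup>2) has_sum 1) UNIV"
  shows "density_op (vop v)"
  unfolding density_op_def
proof (intro conjI allI impI)
  fix i j show "vop v j i = cnj (vop v i j)" unfolding vop_def by simp
next
  fix x :: "'a \<Rightarrow> complex" assume fin: "finite {i. x i \<noteq> 0}"
  define S where "S = {i. x i \<noteq> 0}"
  define w where "w = (\<Sum>i\<in>S. cnj (x i) * v i)"
  have "(\<Sum>i\<in>S. \<Sum>j\<in>S. cnj (x i) * vop v i j * x j) = w * cnj w"
    unfolding w_def vop_def cnj_sum sum_product by (simp add: mult_ac)
  also have "\<dots> = complex_of_real ((Re w)\<^sup>2 + (Im w)\<^sup>2)" by (rule complex_mult_cnj)
  finally show "0 \<le> Re (\<Sum>i\<in>{i. x i \<noteq> 0}. \<Sum>j\<in>{i. x i \<noteq> 0}. cnj (x i) * vop v i j * x j)"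
    unfolding S_def by simp
next
  have "Re (vop v i i) = (cmod (v i))\<^sup>2" for i
    unfolding vop_def using cmod_power2[of "v i"] by (simp add: power2_eq_square)
  then show "((\<lambda>i. Re (vop v i i)) has_sum 1) UNIV" using assms by simp
qed

lemma product_state_vop:
  assumes "density_op (A :: 'a op)" "density_op (B :: 'e op)"
  shows "product_state (\<lambda>(a, e) (a', e'). A a a' * B e e')"
  unfolding product_state_def using assms by blast

lemma conv_mem:
  fixes P :: "'i \<Rightarrow> ('a \<times> 'e) op"
  assumes "finite X" "\<And>x. x \<in> X \<Longrightarrow> 0 \<le> p x" "\<And>x. x \<in> X \<Longrightarrow> product_state (P x)"
    "(\<Sum>x\<in>X. p x) = 1"
  shows "(\<lambda>u v. \<Sum>x\<in>X. complex_of_real (p x) * P x u v) \<in> conv_product_states"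
proof -
  obtain h where h: "bij_betw h {0..<card X} X" using ex_bij_betw_nat_finite[OF assms(1)] by blast
  define k where "k = card X"
  have s1: "(\<Sum>j<k. p (h j)) = 1"
  proof -
    have "(\<Sum>j\<in>{0..<card X}. p (h j)) = (\<Sum>x\<in>X. p x)" by (rule sum.reindex_bij_betw[OF h])
    then show ?thesis using assms(4) unfolding k_def atLeast0LessThan by simp
  qed
  have s2: "(\<lambda>u v. \<Sum>x\<in>X. complex_of_real (p x) * P x u v) = (\<lambda>u v. \<Sum>j<k. complex_of_real (p (h j)) * P (h j) u v)"
  proof (intro ext)
    fix u v
    have "(\<Sum>j\<in>{0..<card X}. complex_of_real (p (h j)) * P (h j) u v) = (\<Sum>x\<in>X. complex_of_real (p x) * P x u v)"
      by (rule sum.reindex_bij_betw[OF h])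
    then show "(\<Sum>x\<in>X. complex_of_real (p x) * P x u v) = (\<Sum>j<k. complex_of_real (p (h j)) * P (h j) u v)"
      unfolding k_def atLeast0LessThan by simp
  qed
  have hX: "j < k \<Longrightarrow> h j \<in> X" for j using bij_betwE[OF h] by (simp add: k_def)
  show ?thesis unfolding conv_product_states_def s2
  proof (intro CollectI exI[of _ k] exI[of _ "\<lambda>j. p (h j)"] exI[of _ "\<lambda>j. P (h j)"] conjI allI impI refl)
    fix j assume "j < k"
    then show "0 \<le> p (h j)" "product_state (P (h j))" using hX assms(2,3) by auto
  next
    show "(\<Sum>j<k. p (h j)) = 1" by (rule s1)
  qed
qed

lemma cis_ne_1:
  fixes k :: int and N :: nat
  assumes "N > 0" "k \<noteq> 0" "\<bar>k\<bar> < int N"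
  shows "cis (2 * pi * real_of_int k / real N) \<noteq> 1"
proof
  assume "cis (2 * pi * real_of_int k / real N) = 1"
  then have "Re (cis (2 * pi * real_of_int k / real N)) = 1" by simp
  then have "cos (2 * pi * real_of_int k / real N) = 1" by simp
  then obtain i :: int where i: "2 * pi * real_of_int k / real N = real_of_int i * 2 * pi"
    using cos_one_2pi_int by blast
  then have "real_of_int k = real_of_int i * real N" using assms(1) pi_gt_zero
    by (simp add: field_simps)
  then have ki: "k = i * int N" by (metis of_int_eq_iff of_int_mult of_int_of_nat_eq)
  show False
  proof (cases "i = 0")
    case True then show False using ki assms by simp
  next
    case False
    then have "\<bar>i\<bar> \<ge> 1" by simp
    then have "\<bar>i\<bar> * int N \<ge> 1 * int N" by (intro mult_right_mono) auto
    then have "\<bar>i * int N\<bar> \<ge> int N" by (simp add: abs_mult)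
    then show False using ki assms by simp
  qed
qed

lemma root_sum:
  fixes k :: int and N :: nat
  assumes "N > 0" "\<bar>k\<bar> < int N"
  shows "(\<Sum>y<N. cis (2 * pi * real_of_int k * real y / real N)) = (if k = 0 then of_nat N else 0)"
proof (cases "k = 0")
  case True then show ?thesis by simp
next
  case False
  define w where "w = cis (2 * pi * real_of_int k / real N)"
  have w1: "w \<noteq> 1" unfolding w_def by (rule cis_ne_1) (use assms False in auto)
  have pw: "cis (2 * pi * real_of_int k * real y / real N) = w ^ y" for y
    unfolding w_def by (simp only: Complex.DeMoivre) (simp add: field_simps)
  have wN: "w ^ N = 1"
  proof -
    have "w ^ N = cis (2 * pi * real_of_int k)" unfolding w_def using assms(1) by (simp only: Complex.DeMoivre) (simp add: field_simps)
    also have "\<dots> = 1" using cis_multiple_2pi[of "real_of_int k"] by simp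
    finally show ?thesis .
  qed
  have "(\<Sum>y<N. cis (2 * pi * real_of_int k * real y / real N)) = (\<Sum>y<N. w ^ y)" unfolding pw ..
  also have "\<dots> = (w ^ N - 1) / (w - 1)" by (rule geometric_sum[OF w1])
  also have "\<dots> = 0" using wN by simp
  finally show ?thesis using False by simp
qed

lemma cis_sum: "finite I \<Longrightarrow> cis (\<Sum>i\<in>I. f i) = (\<Prod>i\<in>I. cis (f i))"
  by (induction I rule: finite_induct) (simp_all add: cis_mult[symmetric])



definition NN :: "nat \<Rightarrow> nat" where "NN n = n + 2"
definition Gr :: "nat \<Rightarrow> ('d::finite \<Rightarrow> nat) set" where "Gr n = PiE UNIV (\<lambda>_. {..MM n})"
definition Ph :: "nat \<Rightarrow> ('d::finite \<Rightarrow> nat) set" where "Ph n = PiE UNIV (\<lambda>_. {..<NN n})"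
definition rho :: "('d::finite \<Rightarrow> nat) \<Rightarrow> 'd \<Rightarrow> real" where "rho l i = real (Suc (l i))"
definition srho :: "('d::finite \<Rightarrow> nat) \<Rightarrow> real" where "srho l = (\<Sum>i\<in>UNIV. rho l i)"
definition th :: "nat \<Rightarrow> ('d::finite \<Rightarrow> nat) \<Rightarrow> 'd \<Rightarrow> real" where
  "th n j i = 2 * pi * real (j i) / real (NN n)"
definition mon :: "('d::finite \<Rightarrow> nat) \<Rightarrow> ('d \<Rightarrow> nat) \<Rightarrow> real" where
  "mon l e = (\<Prod>i\<in>UNIV. sqrt (rho l i) ^ e i)"
definition pmon :: "('d::finite \<Rightarrow> nat) \<Rightarrow> ('d \<Rightarrow> nat) \<Rightarrow> real" where
  "pmon l e = (\<Prod>i\<in>UNIV. rho l i ^ e i)"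
definition ph :: "nat \<Rightarrow> ('d::finite \<Rightarrow> nat) \<Rightarrow> ('d \<Rightarrow> nat) \<Rightarrow> real" where
  "ph n j e = (\<Sum>i\<in>UNIV. real (e i) * th n j i)"
definition fe :: "('d::finite \<Rightarrow> nat) \<Rightarrow> real" where "fe e = (\<Prod>i\<in>UNIV. fact (e i))"
definition Nv :: "nat \<Rightarrow> ('d::finite \<Rightarrow> nat) \<Rightarrow> real" where
  "Nv L l = (\<Sum>e\<in>lvl L. fact L / fe e * pmon l e)"
definition av :: "nat \<Rightarrow> ('d::finite \<Rightarrow> nat) \<Rightarrow> ('d \<Rightarrow> nat) \<Rightarrow> 'd \<Rightarrow> complex" where
  "av n l j a = complex_of_real (sqrt (rho l a) / sqrt (srho l)) * cis (th n j a)"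
definition bamp :: "nat \<Rightarrow> ('d::finite \<Rightarrow> nat) \<Rightarrow> ('d \<Rightarrow> nat) \<Rightarrow> real" where
  "bamp L l e = sqrt (fact L / fe e) * mon l e / sqrt (Nv L l)"
definition bv :: "nat \<Rightarrow> nat \<Rightarrow> ('d::finite \<Rightarrow> nat) \<Rightarrow> ('d \<Rightarrow> nat) \<Rightarrow> ('d \<Rightarrow> nat) \<Rightarrow> complex" where
  "bv n L l j e = (if lev e = L then complex_of_real (bamp L l e) * cis (ph n j e) else 0)"
definition PS :: "nat \<Rightarrow> nat \<Rightarrow> ('d::finite \<Rightarrow> nat) \<Rightarrow> ('d \<Rightarrow> nat) \<Rightarrow> ('d \<times> ('d \<Rightarrow> nat)) op" where
  "PS n L l j = (\<lambda>(a, e) (a', e'). vop (av n l j) a a' * vop (bv n L l j) e e')"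
definition Cw :: "nat \<Rightarrow> ('d::finite \<Rightarrow> nat) \<Rightarrow> real" where
  "Cw n l = (\<Prod>i\<in>UNIV. real ((MM n - l i) choose n))"
definition wt :: "nat \<Rightarrow> nat \<Rightarrow> ('d::finite \<Rightarrow> nat) \<Rightarrow> real" where
  "wt n L l = srho l * Nv L l * Cw n l"
definition Wt :: "'d::finite itself \<Rightarrow> nat \<Rightarrow> nat \<Rightarrow> real" where
  "Wt T n L = (\<Sum>l\<in>(Gr n :: ('d \<Rightarrow> nat) set). wt n L l)"
definition Qs :: "real \<Rightarrow> 'd::finite itself \<Rightarrow> nat \<Rightarrow> real" where
  "Qs z T n = (\<Sum>L\<le>n. qL z T L)"
definition tau :: "'d::finite itself \<Rightarrow> nat \<Rightarrow> nat \<Rightarrow> ('d \<times> ('d \<Rightarrow> nat)) op" where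
  "tau T n L = (\<lambda>x y. \<Sum>l\<in>(Gr n :: ('d \<Rightarrow> nat) set). \<Sum>j\<in>(Ph n :: ('d \<Rightarrow> nat) set).
      complex_of_real (wt n L l / (real (NN n) ^ CARD('d) * Wt T n L)) * PS n L l j x y)"
definition Smix :: "'d::finite itself \<Rightarrow> real \<Rightarrow> nat \<Rightarrow> ('d \<times> ('d \<Rightarrow> nat)) op" where
  "Smix T z n = (\<lambda>x y. \<Sum>L\<le>n. complex_of_real (qL z T L / Qs z T n) * tau T n L x y)"

lemma rho_pos: "rho l i > 0" unfolding rho_def by simp
lemma srho_pos: "srho l > 0" unfolding srho_def by (intro sum_pos) (auto simp: rho_pos)
lemma mon_pos: "mon l e > 0" unfolding mon_def by (intro prod_pos) (auto simp: rho_pos)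
lemma pmon_pos: "pmon l e > 0" unfolding pmon_def by (intro prod_pos) (auto simp: rho_pos)
lemma fe_pos: "fe e > 0" unfolding fe_def by (intro prod_pos) auto
lemma Nv_pos: "Nv L l > 0"
  unfolding Nv_def by (intro sum_pos finite_lvl lvl_nonempty) (auto intro!: mult_pos_pos divide_pos_pos fe_pos pmon_pos)
lemma Cw_nonneg: "Cw n l \<ge> 0" unfolding Cw_def by (intro prod_nonneg) auto
lemma wt_nonneg: "wt n L l \<ge> 0" unfolding wt_def
  using srho_pos[of l] Nv_pos[of L l] Cw_nonneg[of n l] by (intro mult_nonneg_nonneg) auto

lemma finite_Gr: "finite (Gr n)" unfolding Gr_def by (rule finite_PiE) auto
lemma finite_Ph: "finite (Ph n)" unfolding Ph_def by (rule finite_PiE) auto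
lemma card_Ph: "card (Ph n :: ('d::finite \<Rightarrow> nat) set) = NN n ^ CARD('d)"
  unfolding Ph_def by (simp add: card_PiE)

lemma Wt_pos: "Wt TYPE('d::finite) n L > 0"
proof -
  have z: "(\<lambda>_. 0) \<in> (Gr n :: ('d \<Rightarrow> nat) set)" unfolding Gr_def by auto
  have "Cw n (\<lambda>_::'d. 0) > 0" unfolding Cw_def
    by (intro prod_pos) (auto simp: MM_def zero_less_binomial)
  then have "wt n L (\<lambda>_::'d. 0) > 0" unfolding wt_def using srho_pos Nv_pos by (intro mult_pos_pos) auto
  then show ?thesis unfolding Wt_def
    by (intro sum_pos2[OF finite_Gr z]) (auto simp: wt_nonneg)
qed

lemma qL_nonneg: assumes "0 \<le> z" "z < 1" shows "qL z TYPE('d::finite) L \<ge> 0"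
  unfolding qL_def using assms Dsum_pos[where 'd='d, of L] by (intro mult_nonneg_nonneg) auto

lemma Qs_pos: assumes "0 \<le> z" "z < 1" shows "Qs z TYPE('d::finite) n > 0"
proof -
  have "qL z TYPE('d) 0 > 0" unfolding qL_def using assms Dsum_pos[where 'd='d, of 0] by simp
  moreover have "qL z TYPE('d) 0 \<le> Qs z TYPE('d) n" unfolding Qs_def
    using qL_nonneg[OF assms] by (intro member_le_sum) auto
  ultimately show ?thesis by linarith
qed

lemma cmod_ofreal_cis: "cmod (complex_of_real x * cis t) = \<bar>x\<bar>"
  by (simp add: norm_mult)

lemma density_av: "density_op (vop (av n l j))"
proof (rule density_vop)
  have "(cmod (av n l j a))\<^sup>2 = rho l a / srho l" for a
    unfolding av_def cmod_ofreal_cis using rho_pos[of l a] srho_pos[of l]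
    by (simp add: power_divide abs_div)
  then have "(\<Sum>a\<in>UNIV. (cmod (av n l j a))\<^sup>2) = 1"
    using srho_pos[of l] by (simp add: sum_divide_distrib[symmetric] srho_def)
  then show "((\<lambda>x. (cmod (av n l j x))\<^sup>2) has_sum 1) UNIV" by (simp add: has_sum_finiteI)
qed

lemma sqrt_sq: "0 \<le> x \<Longrightarrow> sqrt x * sqrt x = x"
  by (metis power2_eq_square real_sqrt_pow2)

lemma mon_sq: "mon l e * mon l e = pmon l e"
  unfolding mon_def pmon_def prod.distrib[symmetric]
  by (intro prod.cong refl) (simp add: power_mult_distrib[symmetric] rho_pos less_imp_le)

lemma density_bv: "density_op (vop (bv n L l j))"
proof (rule density_vop)
  have c: "(cmod (bv n L l j e))\<^sup>2 = (if e \<in> lvl L then fact L / fe e * pmon l e / Nv L l else 0)" for e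
  proof (cases "lev e = L")
    case True
    have "(cmod (bv n L l j e))\<^sup>2 = (bamp L l e)\<^sup>2" unfolding bv_def using True cmod_ofreal_cis by simp
    also have "\<dots> = fact L / fe e * pmon l e / Nv L l"
    proof -
      have s1: "sqrt (fact L / fe e) * sqrt (fact L / fe e) = fact L / fe e"
        using fe_pos[of e] by (intro sqrt_sq) simp
      have s2: "sqrt (Nv L l) * sqrt (Nv L l) = Nv L l"
        using Nv_pos[of L l] by (intro sqrt_sq) simp
      have "(bamp L l e)\<^sup>2 = (sqrt (fact L / fe e) * sqrt (fact L / fe e)) * (mon l e * mon l e) / (sqrt (Nv L l) * sqrt (Nv L l))"
        unfolding bamp_def power2_eq_square by (simp add: field_simps)
      then show ?thesis unfolding s1 s2 mon_sq by simp
    qed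
    finally show ?thesis using True by (simp add: lvl_def)
  next
    case False then show ?thesis by (simp add: bv_def lvl_def)
  qed
  have fin: "((\<lambda>e. fact L / fe e * pmon l e / Nv L l) has_sum (\<Sum>e\<in>lvl L. fact L / fe e * pmon l e / Nv L l)) (lvl L)"
    by (rule has_sum_finiteI[OF finite_lvl]) simp
  have iff: "((\<lambda>e. (cmod (bv n L l j e))\<^sup>2) has_sum (\<Sum>e\<in>lvl L. fact L / fe e * pmon l e / Nv L l)) UNIV
     \<longleftrightarrow> ((\<lambda>e. fact L / fe e * pmon l e / Nv L l) has_sum (\<Sum>e\<in>lvl L. fact L / fe e * pmon l e / Nv L l)) (lvl L)"
    by (rule has_sum_cong_neutral) (auto simp: c)
  have "((\<lambda>e. (cmod (bv n L l j e))\<^sup>2) has_sum (\<Sum>e\<in>lvl L. fact L / fe e * pmon l e / Nv L l)) UNIV"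
    using iff fin by simp
  moreover have "(\<Sum>e\<in>lvl L. fact L / fe e * pmon l e / Nv L l) = 1"
    unfolding sum_divide_distrib[symmetric] Nv_def[symmetric] using Nv_pos[of L l] by simp
  ultimately show "((\<lambda>e. (cmod (bv n L l j e))\<^sup>2) has_sum 1) UNIV" by simp
qed

lemma product_PS: "product_state (PS n L l j)"
  unfolding PS_def by (rule product_state_vop[OF density_av density_bv])

lemma Smix_conv:
  assumes "0 \<le> z" "z < 1"
  shows "Smix TYPE('d::finite) z n \<in> conv_product_states"
proof -
  define X where "X = Sigma {..n} (\<lambda>_. (Gr n :: ('d \<Rightarrow> nat) set) \<times> (Ph n :: ('d \<Rightarrow> nat) set))"
  define p :: "nat \<times> ('d \<Rightarrow> nat) \<times> ('d \<Rightarrow> nat) \<Rightarrow> real" where "p = (\<lambda>(L, l, j). qL z TYPE('d) L / Qs z TYPE('d) n * (wt n L l / (real (NN n) ^ CARD('d) * Wt TYPE('d) n L)))"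
  define P :: "nat \<times> ('d \<Rightarrow> nat) \<times> ('d \<Rightarrow> nat) \<Rightarrow> ('d \<times> ('d \<Rightarrow> nat)) op" where "P = (\<lambda>(L, l, j). PS n L l j)"
  have finX: "finite X" unfolding X_def using finite_Gr finite_Ph by auto
  have eq: "Smix TYPE('d) z n = (\<lambda>u v. \<Sum>x\<in>X. complex_of_real (p x) * P x u v)"
  proof (intro ext)
    fix u v :: "'d \<times> ('d \<Rightarrow> nat)"
    define F where "F = (\<lambda>L (l::'d \<Rightarrow> nat, j::'d \<Rightarrow> nat). complex_of_real (qL z TYPE('d) L / Qs z TYPE('d) n) *
        (complex_of_real (wt n L l / (real (NN n) ^ CARD('d) * Wt TYPE('d) n L)) * PS n L l j u v))"
    have "Smix TYPE('d) z n u v = (\<Sum>L\<le>n. \<Sum>y\<in>(Gr n :: ('d \<Rightarrow> nat) set) \<times> (Ph n :: ('d \<Rightarrow> nat) set). F L y)"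
      unfolding Smix_def tau_def
    proof (rule sum.cong[OF refl])
      fix L
      have "complex_of_real (qL z TYPE('d) L / Qs z TYPE('d) n) * (\<Sum>l\<in>(Gr n :: ('d \<Rightarrow> nat) set). \<Sum>j\<in>(Ph n :: ('d \<Rightarrow> nat) set).
         complex_of_real (wt n L l / (real (NN n) ^ CARD('d) * Wt TYPE('d) n L)) * PS n L l j u v)
        = (\<Sum>l\<in>(Gr n :: ('d \<Rightarrow> nat) set). \<Sum>j\<in>(Ph n :: ('d \<Rightarrow> nat) set). complex_of_real (qL z TYPE('d) L / Qs z TYPE('d) n) *
         (complex_of_real (wt n L l / (real (NN n) ^ CARD('d) * Wt TYPE('d) n L)) * PS n L l j u v))"
        by (simp only: sum_distrib_left)
      also have "\<dots> = (\<Sum>(l, j)\<in>(Gr n :: ('d \<Rightarrow> nat) set) \<times> (Ph n :: ('d \<Rightarrow> nat) set). complex_of_real (qL z TYPE('d) L / Qs z TYPE('d) n) *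
         (complex_of_real (wt n L l / (real (NN n) ^ CARD('d) * Wt TYPE('d) n L)) * PS n L l j u v))"
        by (rule sum.cartesian_product)
      finally show "complex_of_real (qL z TYPE('d) L / Qs z TYPE('d) n) * (\<Sum>l\<in>(Gr n :: ('d \<Rightarrow> nat) set). \<Sum>j\<in>(Ph n :: ('d \<Rightarrow> nat) set).
         complex_of_real (wt n L l / (real (NN n) ^ CARD('d) * Wt TYPE('d) n L)) * PS n L l j u v)
        = (\<Sum>y\<in>(Gr n :: ('d \<Rightarrow> nat) set) \<times> (Ph n :: ('d \<Rightarrow> nat) set). F L y)"
        unfolding F_def .
    qed
    also have "\<dots> = (\<Sum>(L, y)\<in>X. F L y)"
      unfolding X_def using finite_Gr finite_Ph by (intro sum.Sigma) auto
    also have "\<dots> = (\<Sum>x\<in>X. complex_of_real (p x) * P x u v)"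
    proof (rule sum.cong[OF refl])
      fix x assume "x \<in> X"
      obtain L l j where x: "x = (L, l, j)" by (cases x) auto
      show "(case x of (L, y) \<Rightarrow> F L y) = complex_of_real (p x) * P x u v"
        unfolding x F_def p_def P_def by (simp only: split of_real_mult mult.assoc)
    qed
    finally show "Smix TYPE('d) z n u v = (\<Sum>x\<in>X. complex_of_real (p x) * P x u v)" .
  qed
  have pnn: "0 \<le> p x" for x
  proof -
    obtain L l j where x: "x = (L, l, j)" by (cases x) auto
    have "0 \<le> qL z TYPE('d) L / Qs z TYPE('d) n"
      using qL_nonneg[OF assms, where 'd='d, of L] Qs_pos[OF assms, where 'd='d, of n] by simp
    moreover have "0 \<le> wt n L l / (real (NN n) ^ CARD('d) * Wt TYPE('d) n L)"
      using wt_nonneg[of n L l] Wt_pos[where 'd='d, of n L] by (simp add: NN_def)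
    ultimately show ?thesis unfolding x p_def by (simp only: split) (rule mult_nonneg_nonneg)
  qed
  have psum: "(\<Sum>x\<in>X. p x) = 1"
  proof -
    have inner: "(\<Sum>(l, j)\<in>(Gr n :: ('d \<Rightarrow> nat) set) \<times> (Ph n :: ('d \<Rightarrow> nat) set).
        wt n L l / (real (NN n) ^ CARD('d) * Wt TYPE('d) n L)) = 1" for L
    proof -
      have "(\<Sum>(l, j)\<in>(Gr n :: ('d \<Rightarrow> nat) set) \<times> (Ph n :: ('d \<Rightarrow> nat) set).
          wt n L l / (real (NN n) ^ CARD('d) * Wt TYPE('d) n L))
          = (\<Sum>l\<in>(Gr n :: ('d \<Rightarrow> nat) set). real (card (Ph n :: ('d \<Rightarrow> nat) set)) * (wt n L l / (real (NN n) ^ CARD('d) * Wt TYPE('d) n L)))"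
        by (simp add: sum.cartesian_product[symmetric])
      also have "\<dots> = (\<Sum>l\<in>(Gr n :: ('d \<Rightarrow> nat) set). wt n L l) / Wt TYPE('d) n L"
        unfolding card_Ph using Wt_pos[where 'd='d, of n L] by (simp add: sum_divide_distrib NN_def)
      also have "(\<Sum>l\<in>(Gr n :: ('d \<Rightarrow> nat) set). wt n L l) = Wt TYPE('d) n L" by (simp add: Wt_def)
      also have "Wt TYPE('d) n L / Wt TYPE('d) n L = 1" using Wt_pos[where 'd='d, of n L] by simp
      finally show ?thesis .
    qed
    define F where "F = (\<lambda>L (l::'d \<Rightarrow> nat, j::'d \<Rightarrow> nat). qL z TYPE('d) L / Qs z TYPE('d) n *
        (wt n L l / (real (NN n) ^ CARD('d) * Wt TYPE('d) n L)))"
    have "(\<Sum>x\<in>X. p x) = (\<Sum>(L, y)\<in>X. F L y)"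
    proof (rule sum.cong[OF refl])
      fix x assume "x \<in> X"
      obtain L l j where x: "x = (L, l, j)" by (cases x) auto
      show "p x = (case x of (L, y) \<Rightarrow> F L y)"
        unfolding x F_def p_def by (simp only: split)
    qed
    also have "\<dots> = (\<Sum>L\<le>n. \<Sum>y\<in>(Gr n :: ('d \<Rightarrow> nat) set) \<times> (Ph n :: ('d \<Rightarrow> nat) set). F L y)"
      unfolding X_def using finite_Gr finite_Ph by (intro sum.Sigma[symmetric]) auto
    also have "\<dots> = (\<Sum>L\<le>n. qL z TYPE('d) L / Qs z TYPE('d) n *
        (\<Sum>(l, j)\<in>(Gr n :: ('d \<Rightarrow> nat) set) \<times> (Ph n :: ('d \<Rightarrow> nat) set).
        wt n L l / (real (NN n) ^ CARD('d) * Wt TYPE('d) n L)))"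
      unfolding F_def by (simp add: sum_distrib_left case_prod_unfold)
    finally have "(\<Sum>x\<in>X. p x) = (\<Sum>L\<le>n. qL z TYPE('d) L / Qs z TYPE('d) n *
        (\<Sum>(l, j)\<in>(Gr n :: ('d \<Rightarrow> nat) set) \<times> (Ph n :: ('d \<Rightarrow> nat) set).
        wt n L l / (real (NN n) ^ CARD('d) * Wt TYPE('d) n L)))" .
    also have "\<dots> = (\<Sum>L\<le>n. qL z TYPE('d) L) / Qs z TYPE('d) n"
      unfolding inner by (simp add: sum_divide_distrib)
    also have "\<dots> = 1" using Qs_pos[OF assms, where 'd='d, of n] unfolding Qs_def by simp
    finally show ?thesis .
  qed
  show ?thesis unfolding eq
    by (rule conv_mem[OF finX pnn _ psum]) (auto simp: P_def product_PS)
qed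



lemma mon_addu: "mon l (addu e a) = mon l e * sqrt (rho l a)"
proof -
  have "mon l (addu e a) = (\<Prod>i\<in>UNIV. sqrt (rho l i) ^ e i * (if i = a then sqrt (rho l i) else 1))"
    unfolding mon_def addu_def unit_exc_def by (intro prod.cong refl) (simp add: power_add)
  also have "\<dots> = mon l e * sqrt (rho l a)"
    unfolding prod.distrib mon_def by simp
  finally show ?thesis .
qed

lemma pmon_addu: "pmon l (addu e a) = pmon l e * rho l a"
proof -
  have "pmon l (addu e a) = (\<Prod>i\<in>UNIV. rho l i ^ e i * (if i = a then rho l i else 1))"
    unfolding pmon_def addu_def unit_exc_def by (intro prod.cong refl) (simp add: power_add)
  also have "\<dots> = pmon l e * rho l a"
    unfolding prod.distrib pmon_def by simp
  finally show ?thesis .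
qed

lemma ph_addu: "ph n j (addu e a) = ph n j e + th n j a"
proof -
  have "ph n j (addu e a) = (\<Sum>i\<in>UNIV. real (e i) * th n j i + (if i = a then th n j i else 0))"
    unfolding ph_def addu_def unit_exc_def by (intro sum.cong refl) (simp add: algebra_simps)
  also have "\<dots> = ph n j e + th n j a"
    unfolding sum.distrib ph_def by simp
  finally show ?thesis .
qed

lemma fe_addu: "fe (addu e a) = fe e * real (Suc (e a))"
proof -
  have "fe (addu e a) = (\<Prod>i\<in>UNIV. fact (e i) * (if i = a then real (Suc (e i)) else 1))"
    unfolding fe_def addu_def unit_exc_def by (intro prod.cong refl) (simp add: algebra_simps)
  also have "\<dots> = fe e * real (Suc (e a))"
    unfolding prod.distrib fe_def by simp
  finally show ?thesis .
qed

lemma addu_le: "addu e a i \<le> Suc (lev e)"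
  using le_lev[of "addu e a" i] lev_addu[of e a] by simp

lemma vop_form: "(complex_of_real x * cis u) * cnj (complex_of_real y * cis v) = complex_of_real (x * y) * cis (u - v)"
proof -
  have c: "cnj (complex_of_real y * cis v) = complex_of_real y * cis (- v)" by (simp add: cis_cnj)
  have "(complex_of_real x * cis u) * (complex_of_real y * cis (- v)) = (complex_of_real x * complex_of_real y) * (cis u * cis (- v))"
    by (simp only: mult_ac)
  also have "\<dots> = complex_of_real (x * y) * cis (u - v)"
    by (simp only: cis_mult of_real_mult diff_conv_add_uminus)
  finally show ?thesis unfolding c .
qed

lemma PS_entry:
  assumes "lev e = L" "lev e' = L"
  shows "complex_of_real (wt n L l) * PS n L l j (a, e) (a', e') =
    complex_of_real (Cw n l * (sqrt (fact L / fe e) * sqrt (fact L / fe e')) * (mon l (addu e a) * mon l (addu e' a')))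
      * cis (ph n j (addu e a) - ph n j (addu e' a'))"
proof -
  define s where "s = sqrt (srho l)"
  define t where "t = sqrt (Nv L l)"
  have s: "s * s = srho l" "s > 0" unfolding s_def using srho_pos[of l] by (auto intro: sqrt_sq)
  have t: "t * t = Nv L l" "t > 0" unfolding t_def using Nv_pos[of L l] by (auto intro: sqrt_sq)
  have va: "vop (av n l j) a a' = complex_of_real (sqrt (rho l a) / s * (sqrt (rho l a') / s)) * cis (th n j a - th n j a')"
    unfolding vop_def av_def s_def by (rule vop_form)
  have vb: "vop (bv n L l j) e e' = complex_of_real (bamp L l e * bamp L l e') * cis (ph n j e - ph n j e')"
  proof -
    have "bv n L l j e = complex_of_real (bamp L l e) * cis (ph n j e)" "bv n L l j e' = complex_of_real (bamp L l e') * cis (ph n j e')"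
      unfolding bv_def using assms by simp_all
    then show ?thesis unfolding vop_def by (simp only: vop_form)
  qed
  have ang: "th n j a - th n j a' + (ph n j e - ph n j e') = ph n j (addu e a) - ph n j (addu e' a')"
    unfolding ph_addu by simp
  have re: "wt n L l * (sqrt (rho l a) / s * (sqrt (rho l a') / s) * (bamp L l e * bamp L l e'))
      = Cw n l * (sqrt (fact L / fe e) * sqrt (fact L / fe e')) * (mon l (addu e a) * mon l (addu e' a'))"
    unfolding wt_def bamp_def mon_addu t_def[symmetric] s(1)[symmetric] t(1)[symmetric]
    using s(2) t(2) by (simp add: field_simps)
  have "complex_of_real (wt n L l) * PS n L l j (a, e) (a', e')
      = complex_of_real (wt n L l) * (complex_of_real (sqrt (rho l a) / s * (sqrt (rho l a') / s)) * cis (th n j a - th n j a')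
         * (complex_of_real (bamp L l e * bamp L l e') * cis (ph n j e - ph n j e')))"
  proof -
    have "PS n L l j (a, e) (a', e') = vop (av n l j) a a' * vop (bv n L l j) e e'" by (simp add: PS_def)
    then show ?thesis unfolding va vb by (simp only:)
  qed
  also have "\<dots> = complex_of_real (wt n L l * (sqrt (rho l a) / s * (sqrt (rho l a') / s) * (bamp L l e * bamp L l e')))
      * cis (th n j a - th n j a' + (ph n j e - ph n j e'))"
    by (simp add: cis_mult[symmetric] mult_ac)
  also have "\<dots> = complex_of_real (Cw n l * (sqrt (fact L / fe e) * sqrt (fact L / fe e')) * (mon l (addu e a) * mon l (addu e' a')))
      * cis (ph n j (addu e a) - ph n j (addu e' a'))"
    unfolding re ang ..
  finally show ?thesis .
qed

lemma prod_if_const: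
  fixes c :: complex
  shows "(\<Prod>i\<in>(UNIV::'d::finite set). if P i then c else 0) = (if (\<forall>i. P i) then c ^ CARD('d) else 0)"
proof (cases "\<forall>i. P i")
  case True then show ?thesis by simp
next
  case False
  then obtain i where "\<not> P i" by blast
  then have "(\<Prod>i\<in>(UNIV::'d set). if P i then c else 0) = 0"
    by (intro prod_zero) auto
  then show ?thesis using False by simp
qed

lemma phase_sum:
  fixes m m' :: "'d::finite \<Rightarrow> nat"
  assumes "\<And>i. m i < NN n" "\<And>i. m' i < NN n"
  shows "(\<Sum>j\<in>(Ph n :: ('d \<Rightarrow> nat) set). cis (ph n j m - ph n j m')) = (if m = m' then of_nat (NN n ^ CARD('d)) else 0)"
proof -
  define k where "k i = int (m i) - int (m' i)" for i
  define F where "F i y = cis (2 * pi * real_of_int (k i) * real y / real (NN n))" for i and y :: nat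
  have Npos: "NN n > 0" unfolding NN_def by simp
  have e1: "ph n j m - ph n j m' = (\<Sum>i\<in>UNIV. 2 * pi * real_of_int (k i) * real (j i) / real (NN n))" for j
    unfolding ph_def th_def k_def sum_subtractf[symmetric]
    using Npos by (intro sum.cong refl) (simp add: field_simps)
  have e2: "cis (ph n j m - ph n j m') = (\<Prod>i\<in>UNIV. F i (j i))" for j
    unfolding e1 F_def by (simp add: cis_sum)
  have "(\<Sum>j\<in>(Ph n :: ('d \<Rightarrow> nat) set). cis (ph n j m - ph n j m'))
      = (\<Sum>j\<in>PiE (UNIV::'d set) (\<lambda>_. {..<NN n}). \<Prod>i\<in>UNIV. F i (j i))"
    unfolding Ph_def e2 ..
  also have "\<dots> = (\<Prod>i\<in>(UNIV::'d set). \<Sum>y\<in>{..<NN n}. F i y)"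
    by (rule prod_sum_PiE[symmetric]) auto
  also have "\<dots> = (\<Prod>i\<in>(UNIV::'d set). if k i = 0 then of_nat (NN n) else 0)"
  proof (rule prod.cong[OF refl])
    fix i
    have "\<bar>k i\<bar> < int (NN n)" unfolding k_def using assms[of i] by auto
    then show "(\<Sum>y\<in>{..<NN n}. F i y) = (if k i = 0 then of_nat (NN n) else 0)"
      unfolding F_def by (rule root_sum[OF Npos])
  qed
  also have "\<dots> = (if (\<forall>i. k i = 0) then of_nat (NN n) ^ CARD('d) else 0)"
    by (rule prod_if_const)
  also have "(\<forall>i. k i = 0) \<longleftrightarrow> m = m'" unfolding k_def fun_eq_iff by auto
  finally show ?thesis by simp
qed

lemma grid_sum: "(\<Sum>l\<in>(Gr n :: ('d::finite \<Rightarrow> nat) set). Cw n l * pmon l m) = (\<Prod>i\<in>UNIV. Usum n (m i))"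
proof -
  have "(\<Sum>l\<in>(Gr n :: ('d \<Rightarrow> nat) set). Cw n l * pmon l m)
     = (\<Sum>l\<in>PiE (UNIV::'d set) (\<lambda>_. {..MM n}). \<Prod>i\<in>UNIV. real ((MM n - l i) choose n) * real (Suc (l i)) ^ m i)"
    unfolding Gr_def Cw_def pmon_def rho_def prod.distrib ..
  also have "\<dots> = (\<Prod>i\<in>(UNIV::'d set). \<Sum>y\<in>{..MM n}. real ((MM n - y) choose n) * real (Suc y) ^ m i)"
    by (rule prod_sum_PiE[symmetric]) auto
  also have "\<dots> = (\<Prod>i\<in>UNIV. Usum n (m i))" unfolding Usum_def ..
  finally show ?thesis .
qed

lemma wt_expand: "wt n L l = (\<Sum>i'\<in>UNIV. \<Sum>e\<in>lvl L. fact L / fe e * (Cw n l * pmon l (addu e i')))"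
proof -
  have "srho l * Nv L l = (\<Sum>i'\<in>UNIV. \<Sum>e\<in>lvl L. rho l i' * (fact L / fe e * pmon l e))"
    unfolding srho_def Nv_def sum_product ..
  also have "\<dots> = (\<Sum>i'\<in>UNIV. \<Sum>e\<in>lvl L. fact L / fe e * pmon l (addu e i'))"
    unfolding pmon_addu by (simp add: mult_ac)
  finally have A: "srho l * Nv L l = (\<Sum>i'\<in>UNIV. \<Sum>e\<in>lvl L. fact L / fe e * pmon l (addu e i'))" .
  have "wt n L l = (\<Sum>i'\<in>UNIV. \<Sum>e\<in>lvl L. fact L / fe e * pmon l (addu e i')) * Cw n l"
    unfolding wt_def A ..
  also have "\<dots> = (\<Sum>i'\<in>UNIV. \<Sum>e\<in>lvl L. fact L / fe e * pmon l (addu e i') * Cw n l)"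
    by (simp only: sum_distrib_right)
  also have "\<dots> = (\<Sum>i'\<in>UNIV. \<Sum>e\<in>lvl L. fact L / fe e * (Cw n l * pmon l (addu e i')))"
    by (intro sum.cong refl) (simp only: mult_ac)
  finally show ?thesis .
qed

lemma Wt_formula: "Wt TYPE('d::finite) n L = (\<Sum>i'\<in>UNIV. \<Sum>e\<in>(lvl L :: ('d \<Rightarrow> nat) set). fact L / fe e * (\<Prod>i\<in>UNIV. Usum n (addu e i' i)))"
proof -
  have "Wt TYPE('d) n L = (\<Sum>l\<in>(Gr n :: ('d \<Rightarrow> nat) set). \<Sum>i'\<in>UNIV. \<Sum>e\<in>lvl L. fact L / fe e * (Cw n l * pmon l (addu e i')))"
    unfolding Wt_def wt_expand ..
  also have "\<dots> = (\<Sum>i'\<in>UNIV. \<Sum>e\<in>(lvl L :: ('d \<Rightarrow> nat) set). fact L / fe e * (\<Sum>l\<in>(Gr n :: ('d \<Rightarrow> nat) set). Cw n l * pmon l (addu e i')))"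
    unfolding sum_distrib_left by (subst sum.swap) (subst (2) sum.swap, rule refl)
  also have "\<dots> = (\<Sum>i'\<in>UNIV. \<Sum>e\<in>(lvl L :: ('d \<Rightarrow> nat) set). fact L / fe e * (\<Prod>i\<in>UNIV. Usum n (addu e i' i)))"
    unfolding grid_sum ..
  finally show ?thesis .
qed

lemma tau_entry:
  fixes e e' :: "'d::finite \<Rightarrow> nat"
  assumes hm: "\<And>i. addu e a i < NN n" and hm': "\<And>i. addu e' a' i < NN n"
  shows "tau TYPE('d) n L (a, e) (a', e') = complex_of_real (if lev e = L \<and> lev e' = L \<and> addu e a = addu e' a'
     then sqrt (fact L / fe e) * sqrt (fact L / fe e') * (\<Prod>i\<in>UNIV. Usum n (addu e a i)) / Wt TYPE('d) n L else 0)"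
proof (cases "lev e = L \<and> lev e' = L")
  case False
  then have "PS n L l j (a, e) (a', e') = 0" for l j
    unfolding PS_def vop_def bv_def by auto
  then have "tau TYPE('d) n L (a, e) (a', e') = 0" unfolding tau_def by simp
  moreover have "\<not> (lev e = L \<and> lev e' = L \<and> addu e a = addu e' a')" using False by blast
  ultimately show ?thesis by (simp only: if_False of_real_0)
next
  case True
  define c where "c = 1 / (real (NN n) ^ CARD('d) * Wt TYPE('d) n L)"
  define R where "R l = Cw n l * (sqrt (fact L / fe e) * sqrt (fact L / fe e')) * (mon l (addu e a) * mon l (addu e' a'))" for l
  have step1: "complex_of_real (wt n L l / (real (NN n) ^ CARD('d) * Wt TYPE('d) n L)) * PS n L l j (a, e) (a', e')
      = complex_of_real c * (complex_of_real (R l) * cis (ph n j (addu e a) - ph n j (addu e' a')))" for l j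
  proof -
    have "wt n L l / (real (NN n) ^ CARD('d) * Wt TYPE('d) n L) = c * wt n L l" unfolding c_def by simp
    then have "complex_of_real (wt n L l / (real (NN n) ^ CARD('d) * Wt TYPE('d) n L)) * PS n L l j (a, e) (a', e')
        = complex_of_real c * (complex_of_real (wt n L l) * PS n L l j (a, e) (a', e'))"
      by (simp only: of_real_mult mult.assoc)
    also have "\<dots> = complex_of_real c * (complex_of_real (R l) * cis (ph n j (addu e a) - ph n j (addu e' a')))"
      unfolding PS_entry[OF conjunct1[OF True] conjunct2[OF True]] R_def ..
    finally show ?thesis .
  qed
  have "tau TYPE('d) n L (a, e) (a', e') = (\<Sum>l\<in>(Gr n :: ('d \<Rightarrow> nat) set). \<Sum>j\<in>(Ph n :: ('d \<Rightarrow> nat) set).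
       complex_of_real c * (complex_of_real (R l) * cis (ph n j (addu e a) - ph n j (addu e' a'))))"
    unfolding tau_def step1 ..
  also have "\<dots> = complex_of_real c * (\<Sum>l\<in>(Gr n :: ('d \<Rightarrow> nat) set). complex_of_real (R l) *
       (\<Sum>j\<in>(Ph n :: ('d \<Rightarrow> nat) set). cis (ph n j (addu e a) - ph n j (addu e' a'))))"
    by (simp only: sum_distrib_left)
  also have "\<dots> = complex_of_real c * (\<Sum>l\<in>(Gr n :: ('d \<Rightarrow> nat) set). complex_of_real (R l) *
       (if addu e a = addu e' a' then of_nat (NN n ^ CARD('d)) else 0))"
    unfolding phase_sum[OF hm hm'] ..
  also have "\<dots> = complex_of_real (if lev e = L \<and> lev e' = L \<and> addu e a = addu e' a'
     then sqrt (fact L / fe e) * sqrt (fact L / fe e') * (\<Prod>i\<in>UNIV. Usum n (addu e a i)) / Wt TYPE('d) n L else 0)"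
  proof (cases "addu e a = addu e' a'")
    case False then show ?thesis by simp
  next
    case eq: True
    have sR: "(\<Sum>l\<in>(Gr n :: ('d \<Rightarrow> nat) set). R l) = sqrt (fact L / fe e) * sqrt (fact L / fe e') * (\<Prod>i\<in>UNIV. Usum n (addu e a i))"
    proof -
      have "(\<Sum>l\<in>(Gr n :: ('d \<Rightarrow> nat) set). R l) = (\<Sum>l\<in>(Gr n :: ('d \<Rightarrow> nat) set). sqrt (fact L / fe e) * sqrt (fact L / fe e') * (Cw n l * pmon l (addu e a)))"
        unfolding R_def eq[symmetric] mon_sq by (intro sum.cong refl) (simp only: mult_ac)
      also have "\<dots> = sqrt (fact L / fe e) * sqrt (fact L / fe e') * (\<Prod>i\<in>UNIV. Usum n (addu e a i))"
        unfolding sum_distrib_left[symmetric] grid_sum ..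
      finally show ?thesis .
    qed
    have Wp: "Wt TYPE('d) n L > 0" by (rule Wt_pos)
    have Np: "real (NN n) ^ CARD('d) > 0" unfolding NN_def by simp
    have "complex_of_real c * (\<Sum>l\<in>(Gr n :: ('d \<Rightarrow> nat) set). complex_of_real (R l) *
       (if addu e a = addu e' a' then of_nat (NN n ^ CARD('d)) else 0))
       = complex_of_real (c * ((\<Sum>l\<in>(Gr n :: ('d \<Rightarrow> nat) set). R l) * real (NN n ^ CARD('d))))"
      using eq by (simp add: sum_distrib_right)
    also have "c * ((\<Sum>l\<in>(Gr n :: ('d \<Rightarrow> nat) set). R l) * real (NN n ^ CARD('d)))
        = sqrt (fact L / fe e) * sqrt (fact L / fe e') * (\<Prod>i\<in>UNIV. Usum n (addu e a i)) / Wt TYPE('d) n L"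
      unfolding sR c_def using Wp Np by (simp add: field_simps)
    finally show ?thesis using True eq by simp
  qed
  finally show ?thesis .
qed

lemma Smix_entry:
  fixes e e' :: "'d::finite \<Rightarrow> nat"
  assumes "lev e \<le> n" "lev e' \<le> n"
  shows "Smix TYPE('d) z n (a, e) (a', e') = complex_of_real (if addu e a = addu e' a' then
     qL z TYPE('d) (lev e) / Qs z TYPE('d) n * (sqrt (fact (lev e) / fe e) * sqrt (fact (lev e) / fe e')
       * (\<Prod>i\<in>UNIV. Usum n (addu e a i)) / Wt TYPE('d) n (lev e)) else 0)"
proof -
  have h1: "addu e a i < NN n" for i using addu_le[of e a i] assms unfolding NN_def by linarith
  have h2: "addu e' a' i < NN n" for i using addu_le[of e' a' i] assms unfolding NN_def by linarith
  define X where "X L = sqrt (fact L / fe e) * sqrt (fact L / fe e') * (\<Prod>i\<in>UNIV. Usum n (addu e a i)) / Wt TYPE('d) n L" for L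
  have "Smix TYPE('d) z n (a, e) (a', e') = (\<Sum>L\<le>n. complex_of_real (qL z TYPE('d) L / Qs z TYPE('d) n) *
        complex_of_real (if lev e = L \<and> lev e' = L \<and> addu e a = addu e' a' then X L else 0))"
    unfolding Smix_def tau_entry[OF h1 h2] X_def ..
  also have "\<dots> = complex_of_real (if addu e a = addu e' a' then qL z TYPE('d) (lev e) / Qs z TYPE('d) n * X (lev e) else 0)"
  proof (cases "addu e a = addu e' a'")
    case False then show ?thesis by simp
  next
    case True
    then have le: "lev e' = lev e" using addu_eq_lev by metis
    have "(\<Sum>L\<le>n. complex_of_real (qL z TYPE('d) L / Qs z TYPE('d) n) *
        complex_of_real (if lev e = L \<and> lev e' = L \<and> addu e a = addu e' a' then X L else 0))
        = (\<Sum>L\<le>n. if L = lev e then complex_of_real (qL z TYPE('d) L / Qs z TYPE('d) n * X L) else 0)"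
      using True le by (intro sum.cong refl) auto
    also have "\<dots> = complex_of_real (qL z TYPE('d) (lev e) / Qs z TYPE('d) n * X (lev e))"
      using assms(1) by (simp add: sum.delta)
    finally show ?thesis using True by simp
  qed
  finally show ?thesis unfolding X_def .
qed



lemma Usum_Uq: "n \<ge> 1 \<Longrightarrow> Usum n k = Uq n k * (C0 n * real n ^ k)"
  unfolding Uq_def using C0_pos[of n] by simp

lemma prod_Usum:
  fixes m :: "'d::finite \<Rightarrow> nat"
  assumes "n \<ge> 1"
  shows "(\<Prod>i\<in>UNIV. Usum n (m i)) = (\<Prod>i\<in>UNIV. Uq n (m i)) * (C0 n ^ CARD('d) * real n ^ lev m)"
proof -
  have "(\<Prod>i\<in>UNIV. Usum n (m i)) = (\<Prod>i\<in>UNIV. Uq n (m i) * (C0 n * real n ^ m i))"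
    using Usum_Uq[OF assms] by simp
  also have "\<dots> = (\<Prod>i\<in>UNIV. Uq n (m i)) * (C0 n ^ CARD('d) * real n ^ lev m)"
    unfolding prod.distrib lev_def power_sum by simp
  finally show ?thesis .
qed

definition Wq :: "'d::finite itself \<Rightarrow> nat \<Rightarrow> nat \<Rightarrow> real" where
  "Wq T n L = (\<Sum>i'\<in>UNIV. \<Sum>e\<in>(lvl L :: ('d \<Rightarrow> nat) set). fact L / fe e * (\<Prod>i\<in>UNIV. Uq n (addu e i' i)))"

lemma Wt_Wq:
  assumes "n \<ge> 1"
  shows "Wt TYPE('d::finite) n L = Wq TYPE('d) n L * (C0 n ^ CARD('d) * real n ^ Suc L)"
proof -
  have "Wt TYPE('d) n L = (\<Sum>i'\<in>UNIV. \<Sum>e\<in>(lvl L :: ('d \<Rightarrow> nat) set). fact L / fe e *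
      ((\<Prod>i\<in>UNIV. Uq n (addu e i' i)) * (C0 n ^ CARD('d) * real n ^ Suc L)))"
    unfolding Wt_formula
  proof (intro sum.cong refl)
    fix i' e assume "e \<in> (lvl L :: ('d \<Rightarrow> nat) set)"
    then have "lev (addu e i') = Suc L" unfolding lvl_def by (simp add: lev_addu)
    then show "fact L / fe e * (\<Prod>i\<in>UNIV. Usum n (addu e i' i)) = fact L / fe e *
      ((\<Prod>i\<in>UNIV. Uq n (addu e i' i)) * (C0 n ^ CARD('d) * real n ^ Suc L))"
      using prod_Usum[OF assms, of "addu e i'"] by simp
  qed
  also have "\<dots> = Wq TYPE('d) n L * (C0 n ^ CARD('d) * real n ^ Suc L)"
    unfolding Wq_def sum_distrib_right by (simp add: mult_ac)
  finally show ?thesis .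
qed

lemma Wq_lim: "(\<lambda>n. Wq TYPE('d::finite) n L) \<longlonglongrightarrow> fact L * Dsum TYPE('d) L"
proof -
  have "(\<lambda>n. Wq TYPE('d) n L) \<longlonglongrightarrow> (\<Sum>i'\<in>UNIV. \<Sum>e\<in>(lvl L :: ('d \<Rightarrow> nat) set). fact L / fe e * (\<Prod>i\<in>UNIV. fact (addu e i' i)))"
    unfolding Wq_def by (intro tendsto_sum tendsto_mult tendsto_const tendsto_prod Uq_lim)
  also have "(\<Sum>i'\<in>UNIV. \<Sum>e\<in>(lvl L :: ('d \<Rightarrow> nat) set). fact L / fe e * (\<Prod>i\<in>UNIV. fact (addu e i' i) :: real))
      = (\<Sum>i'\<in>UNIV. \<Sum>e\<in>(lvl L :: ('d \<Rightarrow> nat) set). fact L * real (Suc (e i')))"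
  proof (intro sum.cong refl)
    fix i' e
    have "(\<Prod>i\<in>UNIV. fact (addu e i' i) :: real) = fe (addu e i')" unfolding fe_def ..
    then show "fact L / fe e * (\<Prod>i\<in>UNIV. fact (addu e i' i) :: real) = fact L * real (Suc (e i'))"
      using fe_pos[of e] by (simp add: fe_addu)
  qed
  also have "\<dots> = fact L * Dsum TYPE('d) L"
    unfolding Dsum_def sum_distrib_left by (subst sum.swap) (rule refl)
  finally show ?thesis .
qed

lemma sqrt_identity:
  assumes A: "A > 0" and B: "B > 0" and F: "F > 0" and a1: "a1 \<ge> 0" and b1: "b1 \<ge> 0"
    and eq: "A * a1 = B * b1"
  shows "sqrt (F / A) * sqrt (F / B) * (A * a1) / F = sqrt a1 * sqrt b1"
proof -
  have "A * a1 = sqrt (A * a1) * sqrt (A * a1)" using A a1 by (simp add: sqrt_sq)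
  also have "\<dots> = sqrt (A * a1) * sqrt (B * b1)" using eq by simp
  also have "\<dots> = sqrt A * sqrt a1 * (sqrt B * sqrt b1)" by (simp add: real_sqrt_mult)
  finally have h: "A * a1 = sqrt A * sqrt a1 * (sqrt B * sqrt b1)" .
  have sF: "sqrt F * sqrt F = F" using F by (simp add: sqrt_sq)
  have pA: "sqrt A > 0" "sqrt B > 0" using A B by auto
  show ?thesis unfolding h real_sqrt_divide using pA F sF by (simp add: field_simps)
qed

lemma Smix_lim:
  fixes e e' :: "'d::finite \<Rightarrow> nat"
  assumes z: "0 \<le> z" "z < 1"
  shows "(\<lambda>n. Smix TYPE('d) z n (a, e) (a', e')) \<longlonglongrightarrow> complex_of_real (sigma_t z a e a' e')"
proof -
  define g where "g n = (if addu e a = addu e' a' then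
     qL z TYPE('d) (lev e) / Qs z TYPE('d) n * (sqrt (fact (lev e) / fe e) * sqrt (fact (lev e) / fe e')
       * (\<Prod>i\<in>UNIV. Usum n (addu e a i)) / Wt TYPE('d) n (lev e)) else 0)" for n
  have ev: "eventually (\<lambda>n. complex_of_real (g n) = Smix TYPE('d) z n (a, e) (a', e')) sequentially"
    using eventually_ge_at_top[of "max (lev e) (lev e')"]
    by eventually_elim (simp add: g_def Smix_entry)
  have gl: "g \<longlonglongrightarrow> sigma_t z a e a' e'"
  proof (cases "addu e a = addu e' a'")
    case False
    then show ?thesis unfolding g_def sigma_t_def by simp
  next
    case True
    define L where "L = lev e"
    have le': "lev e' = L" using addu_eq_lev[OF True] unfolding L_def by simp
    define m where "m = addu e a"
    define h where "h n = qL z TYPE('d) L / Qs z TYPE('d) n * (sqrt (fact L / fe e) * sqrt (fact L / fe e')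
       * (\<Prod>i\<in>UNIV. Uq n (m i)) / Wq TYPE('d) n L)" for n
    have evh: "eventually (\<lambda>n. h n = g n) sequentially"
      using eventually_ge_at_top[of 1]
    proof eventually_elim
      case (elim n)
      have lm: "lev m = Suc L" unfolding m_def L_def by (simp add: lev_addu)
      have K: "C0 n ^ CARD('d) * real n ^ Suc L > 0" using C0_pos[of n] elim by simp
      have eqr: "(\<Prod>i\<in>UNIV. Usum n (m i)) / Wt TYPE('d) n L = (\<Prod>i\<in>UNIV. Uq n (m i)) / Wq TYPE('d) n L"
        unfolding prod_Usum[OF elim, of m] Wt_Wq[OF elim] lm
        by (rule mult_divide_mult_cancel_right) (use K in linarith)
      have eqr': "(\<Prod>i\<in>UNIV. Usum n (addu e a i)) / Wt TYPE('d) n (lev e) = (\<Prod>i\<in>UNIV. Uq n (addu e a i)) / Wq TYPE('d) n (lev e)"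
        using eqr unfolding m_def L_def .
      show ?case unfolding g_def h_def m_def L_def if_P[OF True] times_divide_eq_right[symmetric] eqr' by (rule refl)
    qed
    have Qlim: "(\<lambda>n. Qs z TYPE('d) n) \<longlonglongrightarrow> 1" unfolding Qs_def by (rule qL_lim[OF z])
    have Dp: "fact L * Dsum TYPE('d) L \<noteq> 0" using Dsum_pos[where 'd='d, of L] by simp
    have hl: "h \<longlonglongrightarrow> qL z TYPE('d) L / 1 * (sqrt (fact L / fe e) * sqrt (fact L / fe e')
       * (\<Prod>i\<in>UNIV. fact (m i)) / (fact L * Dsum TYPE('d) L))"
      unfolding h_def
      by (intro tendsto_mult tendsto_divide tendsto_const Qlim tendsto_prod Uq_lim Wq_lim Dp) simp
    have fm: "(\<Prod>i\<in>UNIV. fact (m i) :: real) = fe m" unfolding fe_def ..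
    have fme: "fe m = fe e * (1 + real (e a))" "fe m = fe e' * (1 + real (e' a'))"
      unfolding m_def using fe_addu[of e a] fe_addu[of e' a'] True by simp_all
    have "qL z TYPE('d) L / 1 * (sqrt (fact L / fe e) * sqrt (fact L / fe e')
       * (\<Prod>i\<in>UNIV. fact (m i)) / (fact L * Dsum TYPE('d) L))
       = (1 / real CARD('d)) * (1 - z) ^ (CARD('d) + 1) * z ^ L *
         (sqrt (fact L / fe e) * sqrt (fact L / fe e') * (fe e * (1 + real (e a))) / fact L)"
      unfolding qL_def fm fme(1) using Dsum_pos[where 'd='d, of L] by (simp add: field_simps)
    also have "sqrt (fact L / fe e) * sqrt (fact L / fe e') * (fe e * (1 + real (e a))) / fact L
       = sqrt (1 + real (e a)) * sqrt (1 + real (e' a'))"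
      by (rule sqrt_identity) (use fe_pos fme in auto)
    also have "(1 / real CARD('d)) * (1 - z) ^ (CARD('d) + 1) * z ^ L * (sqrt (1 + real (e a)) * sqrt (1 + real (e' a')))
        = sigma_t z a e a' e'"
      unfolding sigma_t_def L_def using True by simp
    finally have "h \<longlonglongrightarrow> sigma_t z a e a' e'" using hl by simp
    then show ?thesis using evh by (rule Lim_transform_eventually)
  qed
  have "(\<lambda>n. complex_of_real (g n)) \<longlonglongrightarrow> complex_of_real (sigma_t z a e a' e')"
    by (rule tendsto_of_real[OF gl])
  then show ?thesis using ev by (rule Lim_transform_eventually)
qed

theorem theorem2:
  fixes z r :: real
  assumes "CARD('d::finite) \<ge> 2"
    and "0 \<le> z" and "z < 1"
    and "z = (tanh r)\<^sup>2"
  shows "hadamard_channel (unruh_iso r :: 'd \<Rightarrow> ('d \<Rightarrow> nat) \<Rightarrow> ('d \<Rightarrow> nat) \<Rightarrow> complex)"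
  unfolding hadamard_channel_def entanglement_breaking_def separable_def
proof (intro exI[of _ "\<lambda>n. Smix TYPE('d) z n"] conjI allI)
  fix n show "Smix TYPE('d) z n \<in> conv_product_states" by (rule Smix_conv) (use assms in auto)
next
  fix x y :: "'d \<times> ('d \<Rightarrow> nat)"
  obtain a e where x: "x = (a, e)" by (cases x) auto
  obtain a' e' where y: "y = (a', e')" by (cases y) auto
  show "(\<lambda>n. Smix TYPE('d) z n x y) \<longlonglongrightarrow> choi (compl_channel (unruh_iso r)) x y"
    unfolding x y choi_unruh_sigma assms(4)[symmetric] by (rule Smix_lim) (use assms in auto)
qed


end
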